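(* Let $G$ be a connected finite simple graph of order $p$ and size $q=p+1$ with normal graph algebra $\mathcal{N}G$ over a field $\mathbb{F}$ of characteristic not $2$, such that every set of two distinct edges of $G$ is the support of $u^2$ for some $u\in U_G$. Then $G$ is not edge-square, and $G$ is a doubly-odd paddle graph. Moreover, every doubly-odd paddle graph has the property that every set of two distinct edges is the support of $u^2$ for some $u\in U_G$.
   Context: For a finite simple graph $G$ with vertex set $VG$ and edge set $EG$, $\mathcal{N}G=U_G\oplus\mathfrak{Z}_G$ with $U_G$ having basis $VG$ and $\mathfrak{Z}_G$ basis $EG$ (edge with endpoints $x,y$ written $[x,y]$), commutative bilinear product determined by: for distinct vertices $x,y$, $xy=[x,y]$ if adjacent and $0$ otherwise; $x^2=\sum_{y\sim x}[x,y]$; products involving $\mathfrak{Z}_G$ are $0$. Equivalently, for $u=\sum_x\theta_x x$, $u^2=\sum_{[x,y]\in EG}(\theta_x+\theta_y)^2[x,y]$. The support of $\mathfrak{z}\in\mathfrak{Z}_G$ is the set of edges with nonzero coefficient. $G$ is edge-square if for every edge $\mathfrak{e}$ there is $u\in U_G$ with $u^2=\mathfrak{e}$. A doubly-odd paddle graph is a graph consisting of two edge-disjoint cycles of odd length which either share exactly one vertex, or are vertex-disjoint and joined by a path between a vertex of one and a vertex of the other whose internal vertices lie on neither cycle (and nothing else). *)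

theory Defs
  imports Main
begin

definition simple_graph :: "'a set \<Rightarrow> 'a set set \<Rightarrow> bool" where
  "simple_graph V E \<longleftrightarrow> finite V \<and>
     (\<forall>e\<in>E. \<exists>x y. x \<noteq> y \<and> x \<in> V \<and> y \<in> V \<and> e = {x, y})"

definition adjacent :: "'a set set \<Rightarrow> 'a \<Rightarrow> 'a \<Rightarrow> bool" where
  "adjacent E x y \<longleftrightarrow> {x, y} \<in> E"

definition connected_graph :: "'a set \<Rightarrow> 'a set set \<Rightarrow> bool" where
  "connected_graph V E \<longleftrightarrow> V \<noteq> {} \<and>
     (\<forall>x\<in>V. \<forall>y\<in>V. (\<lambda>a b. a \<in> V \<and> b \<in> V \<and> adjacent E a b)\<^sup>*\<^sup>* x y)"

(* Elements of U_G: coefficient functions theta on the vertex basis. *)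
definition in_U :: "'a set \<Rightarrow> ('a \<Rightarrow> 'k::field) \<Rightarrow> bool" where
  "in_U V \<theta> \<longleftrightarrow> (\<forall>x. x \<notin> V \<longrightarrow> \<theta> x = 0)"

(* u^2 in Z_G, given as coefficient function on edges:
   coefficient of [x,y] is (theta x + theta y)^2; zero off the edge set. *)
definition square :: "'a set set \<Rightarrow> ('a \<Rightarrow> 'k::field) \<Rightarrow> 'a set \<Rightarrow> 'k" where
  "square E \<theta> e = (if e \<in> E then (\<Sum>x\<in>e. \<theta> x)\<^sup>2 else 0)"

definition support :: "'a set set \<Rightarrow> ('a set \<Rightarrow> 'k::field) \<Rightarrow> 'a set set" where
  "support E z = {e \<in> E. z e \<noteq> 0}"

definition edge_vec :: "'a set \<Rightarrow> 'a set \<Rightarrow> 'k::field" where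
  "edge_vec e = (\<lambda>f. if f = e then 1 else 0)"

definition edge_square :: "'k::field itself \<Rightarrow> 'a set \<Rightarrow> 'a set set \<Rightarrow> bool" where
  "edge_square TYPE('k) V E \<longleftrightarrow>
     (\<forall>e\<in>E. \<exists>\<theta> :: 'a \<Rightarrow> 'k. in_U V \<theta> \<and> square E \<theta> = edge_vec e)"

definition two_edge_support :: "'k::field itself \<Rightarrow> 'a set \<Rightarrow> 'a set set \<Rightarrow> bool" where
  "two_edge_support TYPE('k) V E \<longleftrightarrow>
     (\<forall>e1\<in>E. \<forall>e2\<in>E. e1 \<noteq> e2 \<longrightarrow>
        (\<exists>\<theta> :: 'a \<Rightarrow> 'k. in_U V \<theta> \<and> support E (square E \<theta>) = {e1, e2}))"

definition is_cycle :: "'a list \<Rightarrow> bool" where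
  "is_cycle cs \<longleftrightarrow> distinct cs \<and> length cs \<ge> 3"

definition cycle_edges :: "'a list \<Rightarrow> 'a set set" where
  "cycle_edges cs = {{cs ! i, cs ! ((i + 1) mod length cs)} | i. i < length cs}"

definition path_edges :: "'a list \<Rightarrow> 'a set set" where
  "path_edges ps = {{ps ! i, ps ! (i + 1)} | i. i + 1 < length ps}"

definition doubly_odd_paddle :: "'a set \<Rightarrow> 'a set set \<Rightarrow> bool" where
  "doubly_odd_paddle V E \<longleftrightarrow>
     (\<exists>c1 c2. is_cycle c1 \<and> is_cycle c2 \<and> odd (length c1) \<and> odd (length c2) \<and>
        cycle_edges c1 \<inter> cycle_edges c2 = {} \<and>
        ((\<exists>v. set c1 \<inter> set c2 = {v} \<and>
              V = set c1 \<union> set c2 \<and> E = cycle_edges c1 \<union> cycle_edges c2)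
         \<or> (set c1 \<inter> set c2 = {} \<and>
            (\<exists>ps. distinct ps \<and> length ps \<ge> 2 \<and>
               hd ps \<in> set c1 \<and> last ps \<in> set c2 \<and>
               (\<forall>x\<in>set (butlast (tl ps)). x \<notin> set c1 \<and> x \<notin> set c2) \<and>
               V = set c1 \<union> set c2 \<union> set ps \<and>
               E = cycle_edges c1 \<union> cycle_edges c2 \<union> path_edges ps))))"

end

theory Submission
  imports Defs "HOL-Library.Function_Algebras" "HOL.Vector_Spaces"
begin

definition fscale :: "'k::field \<Rightarrow> ('b \<Rightarrow> 'k) \<Rightarrow> ('b \<Rightarrow> 'k)" where
  "fscale c f = (\<lambda>x. c * f x)"

interpretation fvs: vector_space "fscale :: 'k::field \<Rightarrow> ('b \<Rightarrow> 'k) \<Rightarrow> ('b \<Rightarrow> 'k)"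
  by unfold_locales (auto simp: fscale_def fun_eq_iff algebra_simps)

lemma fsum_apply: "finite A \<Longrightarrow> (\<Sum>i\<in>A. (f i :: 'b \<Rightarrow> 'k::field)) x = (\<Sum>i\<in>A. f i x)"
  by (induction A rule: finite_induct) auto

lemma dim_bound:
  fixes V :: "'a set" and E' :: "'a set set"
  assumes fV: "finite V" and fE: "finite E'" and fg: "\<And>g. g \<in> E' \<Longrightarrow> finite g"
    and sq: "\<And>f. f \<in> E' \<Longrightarrow> \<exists>\<theta> :: 'a \<Rightarrow> 'k::field. in_U V \<theta> \<and>
               (\<forall>g\<in>E'. (\<Sum>x\<in>g. \<theta> x) = 0 \<longleftrightarrow> g \<noteq> f)"
  shows "card E' \<le> card V"
proof -
  define w :: "'a \<Rightarrow> 'a set \<Rightarrow> 'k" where "w v = (\<lambda>g. if g \<in> E' \<and> v \<in> g then 1 else 0)" for v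
  define d :: "'a set \<Rightarrow> 'a set \<Rightarrow> 'k" where "d f = (\<lambda>g. if g = f then 1 else 0)" for f
  have dspan: "d f \<in> fvs.span (w ` V)" if f: "f \<in> E'" for f
  proof -
    obtain \<theta> :: "'a \<Rightarrow> 'k" where th: "in_U V \<theta>" "\<forall>g\<in>E'. (\<Sum>x\<in>g. \<theta> x) = 0 \<longleftrightarrow> g \<noteq> f"
      using sq[OF f] by blast
    define c where "c = (\<Sum>x\<in>f. \<theta> x)"
    have c0: "c \<noteq> 0" using th f c_def by auto
    have eq: "(\<Sum>v\<in>V. fscale (\<theta> v) (w v)) = fscale c (d f)"
    proof
      fix g
      have "(\<Sum>v\<in>V. fscale (\<theta> v) (w v)) g = (\<Sum>v\<in>V. \<theta> v * w v g)"
        using fV by (simp add: fsum_apply fscale_def)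
      also have "\<dots> = (if g \<in> E' then (\<Sum>x\<in>g. \<theta> x) else 0)"
      proof (cases "g \<in> E'")
        case True
        have "(\<Sum>v\<in>V. \<theta> v * w v g) = (\<Sum>v\<in>V \<inter> g. \<theta> v)"
          unfolding sum.inter_restrict[OF fV] using True by (intro sum.cong) (auto simp: w_def)
        also have "\<dots> = (\<Sum>x\<in>g. \<theta> x)"
          using th(1) fg[OF True] by (intro sum.mono_neutral_left) (auto simp: in_U_def)
        finally show ?thesis using True by simp
      qed (simp add: w_def)
      also have "\<dots> = fscale c (d f) g"
        using th(2) f unfolding fscale_def d_def c_def by (cases "g \<in> E'") auto
      finally show "(\<Sum>v\<in>V. fscale (\<theta> v) (w v)) g = fscale c (d f) g" .
    qed
    have "fscale c (d f) \<in> fvs.span (w ` V)"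
      unfolding eq[symmetric]
      by (intro fvs.span_sum fvs.span_scale fvs.span_base) auto
    then have "fscale (inverse c) (fscale c (d f)) \<in> fvs.span (w ` V)"
      by (rule fvs.span_scale)
    moreover have "fscale (inverse c) (fscale c (d f)) = d f"
      using c0 by (simp add: fscale_def fun_eq_iff)
    ultimately show ?thesis by simp
  qed
  have injd: "inj d" by (auto simp: inj_def d_def fun_eq_iff split: if_splits)
  have indep: "fvs.independent (d ` E')"
  proof (rule fvs.independent_if_scalars_zero)
    show "finite (d ` E')" using fE by simp
    fix u x assume s: "(\<Sum>y\<in>d ` E'. fscale (u y) y) = 0" and x: "x \<in> d ` E'"
    then obtain f where f: "f \<in> E'" "x = d f" by auto
    have "(\<Sum>y\<in>d ` E'. fscale (u y) y) f = (\<Sum>y\<in>d ` E'. u y * y f)"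
      using fE by (simp add: fsum_apply fscale_def)
    also have "\<dots> = (\<Sum>g\<in>E'. u (d g) * d g f)"
      by (subst sum.reindex) (auto intro: inj_on_subset[OF injd])
    also have "\<dots> = (\<Sum>g\<in>E'. if g = f then u (d f) else 0)"
      by (intro sum.cong) (auto simp: d_def)
    also have "\<dots> = u (d f)"
      using fE f by simp
    finally show "u x = 0" using s f by simp
  qed
  have "card (d ` E') \<le> card (w ` V)"
    using fvs.independent_span_bound[OF _ indep] fV dspan by auto
  also have "\<dots> \<le> card V" using fV by (rule card_image_le)
  finally show ?thesis using card_image[OF inj_on_subset[OF injd]] by simp
qed


lemma pe_Nil[simp]: "path_edges [] = {}"
  by (simp add: path_edges_def)

lemma pe_single[simp]: "path_edges [x] = {}"
  by (simp add: path_edges_def)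

lemma pe_Cons2[simp]: "path_edges (x # y # xs) = insert {x, y} (path_edges (y # xs))"
proof -
  have "path_edges (x # y # xs) = {{(x # y # xs) ! i, (x # y # xs) ! (i + 1)} | i. i + 1 < length (x # y # xs)}"
    by (simp add: path_edges_def)
  also have "\<dots> = insert {x, y} {{(y # xs) ! i, (y # xs) ! (i + 1)} | i. i + 1 < length (y # xs)}"
  proof (intro set_eqI iffI)
    fix g assume "g \<in> {{(x # y # xs) ! i, (x # y # xs) ! (i + 1)} | i. i + 1 < length (x # y # xs)}"
    then obtain i where i: "g = {(x # y # xs) ! i, (x # y # xs) ! (i + 1)}" "i + 1 < length (x # y # xs)" by blast
    show "g \<in> insert {x, y} {{(y # xs) ! i, (y # xs) ! (i + 1)} | i. i + 1 < length (y # xs)}"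
    proof (cases i)
      case 0 then show ?thesis using i by simp
    next
      case (Suc k) then show ?thesis using i by auto
    qed
  next
    fix g assume "g \<in> insert {x, y} {{(y # xs) ! i, (y # xs) ! (i + 1)} | i. i + 1 < length (y # xs)}"
    then show "g \<in> {{(x # y # xs) ! i, (x # y # xs) ! (i + 1)} | i. i + 1 < length (x # y # xs)}"
    proof
      assume "g = {x, y}" then show ?thesis by (auto intro!: exI[of _ 0])
    next
      assume "g \<in> {{(y # xs) ! i, (y # xs) ! (i + 1)} | i. i + 1 < length (y # xs)}"
      then obtain i where "g = {(y # xs) ! i, (y # xs) ! (i + 1)}" "i + 1 < length (y # xs)" by blast
      then show ?thesis by (auto intro!: exI[of _ "Suc i"])
    qed
  qed
  also have "\<dots> = insert {x, y} (path_edges (y # xs))" by (simp add: path_edges_def)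
  finally show ?thesis .
qed

lemma pe_Cons: "xs \<noteq> [] \<Longrightarrow> path_edges (x # xs) = insert {x, hd xs} (path_edges xs)"
  by (cases xs) auto

lemma pe_append: "xs \<noteq> [] \<Longrightarrow> ys \<noteq> [] \<Longrightarrow>
   path_edges (xs @ ys) = path_edges xs \<union> path_edges ys \<union> {{last xs, hd ys}}"
proof (induction xs)
  case Nil then show ?case by simp
next
  case (Cons x xs)
  show ?case
  proof (cases "xs = []")
    case True then show ?thesis using Cons by (simp add: pe_Cons)
  next
    case False then show ?thesis using Cons by (auto simp: pe_Cons)
  qed
qed

lemma pe_join: assumes "xs \<noteq> []" "ys \<noteq> []" "last xs = hd ys"
  shows "path_edges (xs @ tl ys) = path_edges xs \<union> path_edges ys"
proof (cases ys)
  case (Cons y l)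
  then show ?thesis using assms by (cases l) (auto simp: pe_append pe_Cons)
qed (use assms in simp)

lemma pe_snoc: "xs \<noteq> [] \<Longrightarrow> path_edges (xs @ [y]) = insert {last xs, y} (path_edges xs)"
  by (simp add: pe_append)

lemma pe_rev[simp]: "path_edges (rev xs) = path_edges xs"
proof (induction xs)
  case Nil then show ?case by simp
next
  case (Cons x xs)
  then show ?case by (cases "xs = []") (auto simp: pe_snoc pe_Cons last_rev insert_commute doubleton_eq_iff)
qed

lemma pe_subset_append1: "path_edges xs \<subseteq> path_edges (xs @ ys)"
  by (cases "xs = []"; cases "ys = []") (auto simp: pe_append)

lemma pe_subset_append2: "path_edges ys \<subseteq> path_edges (xs @ ys)"
  by (cases "xs = []"; cases "ys = []") (auto simp: pe_append)

lemma pe_take: "path_edges (take n xs) \<subseteq> path_edges xs"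
  using pe_subset_append1[of "take n xs" "drop n xs"] by simp

lemma pe_drop: "path_edges (drop n xs) \<subseteq> path_edges xs"
  using pe_subset_append2[of "drop n xs" "take n xs"] by simp

lemma pe_tl: "path_edges (tl xs) \<subseteq> path_edges xs"
proof (cases xs)
  case (Cons a l)
  then show ?thesis by (cases l) (auto simp: pe_Cons)
qed simp

lemma pe_sub_set: "g \<in> path_edges xs \<Longrightarrow> g \<subseteq> set xs"
  by (auto simp: path_edges_def)

lemma pe_nth: "i + 1 < length xs \<Longrightarrow> {xs ! i, xs ! (i + 1)} \<in> path_edges xs"
  by (auto simp: path_edges_def)

lemma ce_pe: "cs \<noteq> [] \<Longrightarrow> cycle_edges cs = insert {last cs, hd cs} (path_edges cs)"
proof (intro set_eqI iffI)
  fix g assume cs: "cs \<noteq> []" and g: "g \<in> cycle_edges cs"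
  then obtain i where i: "g = {cs ! i, cs ! ((i + 1) mod length cs)}" "i < length cs"
    by (auto simp: cycle_edges_def)
  show "g \<in> insert {last cs, hd cs} (path_edges cs)"
  proof (cases "i + 1 < length cs")
    case True then show ?thesis using i by (auto simp: path_edges_def)
  next
    case False
    then have "i = length cs - 1" using i by auto
    then have "i + 1 = length cs" using cs by simp
    then have "(i + 1) mod length cs = 0" "i = length cs - 1" by simp_all
    then show ?thesis using i cs by (simp add: last_conv_nth hd_conv_nth)
  qed
next
  fix g assume cs: "cs \<noteq> []" and g: "g \<in> insert {last cs, hd cs} (path_edges cs)"
  from g show "g \<in> cycle_edges cs"
  proof (rule insertE)
    assume "g = {last cs, hd cs}"
    then show ?thesis using cs unfolding cycle_edges_def
      by (auto simp: last_conv_nth hd_conv_nth intro!: exI[of _ "length cs - 1"])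
  next
    assume "g \<in> path_edges cs"
    then obtain i where "g = {cs ! i, cs ! (i + 1)}" "i + 1 < length cs" by (auto simp: path_edges_def)
    then show ?thesis unfolding cycle_edges_def by (auto intro!: exI[of _ i])
  qed
qed

lemma ce_sub_set: "g \<in> cycle_edges xs \<Longrightarrow> g \<subseteq> set xs"
  by (cases "xs = []") (auto simp: ce_pe dest: pe_sub_set simp: cycle_edges_def)

lemma walk_to_path:
  assumes "xs \<noteq> []"
  shows "\<exists>ys. ys \<noteq> [] \<and> distinct ys \<and> hd ys = hd xs \<and> last ys = last xs \<and>
              path_edges ys \<subseteq> path_edges xs \<and> set ys \<subseteq> set xs"
  using assms
proof (induction "length xs" arbitrary: xs rule: less_induct)
  case less
  show ?case
  proof (cases "distinct xs")
    case True then show ?thesis using less by (intro exI[of _ xs]) auto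
  next
    case False
    then obtain a z b c where xs: "xs = a @ [z] @ b @ [z] @ c"
      using not_distinct_decomp by blast
    define zs where "zs = a @ [z] @ c"
    have len: "length zs < length xs" using xs zs_def by simp
    have ne: "zs \<noteq> []" using zs_def by simp
    have hd: "hd zs = hd xs" using xs zs_def by (cases a) auto
    have lst: "last zs = last xs" using xs zs_def by (cases c rule: rev_cases) auto
    have pe: "path_edges zs \<subseteq> path_edges xs"
    proof
      fix g assume g: "g \<in> path_edges zs"
      have pz: "path_edges (z # c) \<subseteq> path_edges xs"
        using pe_subset_append2[of "z # c" "a @ [z] @ b"] xs by simp
      show "g \<in> path_edges xs"
      proof (cases "a = []")
        case True then show ?thesis using g pz zs_def by auto
      next
        case False
        have "path_edges zs = path_edges a \<union> path_edges (z # c) \<union> {{last a, z}}"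
          using False zs_def pe_append[of a "z # c"] by simp
        moreover have "path_edges (a @ [z]) \<subseteq> path_edges xs"
          using pe_subset_append1[of "a @ [z]" "b @ [z] @ c"] xs by simp
        moreover have "path_edges (a @ [z]) = path_edges a \<union> {{last a, z}}"
          using False pe_append[of a "[z]"] by simp
        ultimately show ?thesis using g pz by blast
      qed
    qed
    have st: "set zs \<subseteq> set xs" using xs zs_def by auto
    obtain ys where "ys \<noteq> [] \<and> distinct ys \<and> hd ys = hd zs \<and> last ys = last zs \<and>
              path_edges ys \<subseteq> path_edges zs \<and> set ys \<subseteq> set zs"
      using less(1)[OF len ne] by blast
    then show ?thesis using hd lst pe st by (intro exI[of _ ys]) auto
  qed
qed


definition inc :: "'a set set \<Rightarrow> 'a \<Rightarrow> 'a set set" where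
  "inc F z = {g \<in> F. z \<in> g}"

definition twosets :: "'a set set \<Rightarrow> bool" where
  "twosets F \<longleftrightarrow> (\<forall>g\<in>F. \<exists>x y. x \<noteq> y \<and> g = {x, y})"

lemma twosets_subset: "twosets F \<Longrightarrow> G \<subseteq> F \<Longrightarrow> twosets G"
  by (auto simp: twosets_def)

lemma twosets_neq: "twosets F \<Longrightarrow> {x, y} \<in> F \<Longrightarrow> x \<noteq> y"
  unfolding twosets_def by (metis doubleton_eq_iff insert_absorb2)

lemma twosets_card: "twosets F \<Longrightarrow> g \<in> F \<Longrightarrow> card g = 2"
  unfolding twosets_def by auto

lemma twosets_finite: "twosets F \<Longrightarrow> g \<in> F \<Longrightarrow> finite g"
  unfolding twosets_def by auto

lemma dnth: "distinct xs \<Longrightarrow> i < length xs \<Longrightarrow> j < length xs \<Longrightarrow> i \<noteq> j \<Longrightarrow> xs ! i \<noteq> xs ! j"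
  by (simp add: nth_eq_iff_index_eq)

lemma inc_pe_notin: "z \<notin> set xs \<Longrightarrow> inc (path_edges xs) z = {}"
  by (auto simp: inc_def dest: pe_sub_set)

lemma inc_ce_notin: "z \<notin> set xs \<Longrightarrow> inc (cycle_edges xs) z = {}"
  by (auto simp: inc_def dest: ce_sub_set)

lemma inc_pe_hd: "distinct xs \<Longrightarrow> 2 \<le> length xs \<Longrightarrow> inc (path_edges xs) (hd xs) = {{hd xs, xs ! 1}}"
proof (cases xs)
  case (Cons x r)
  assume d: "distinct xs" and l: "2 \<le> length xs"
  then obtain y r' where r: "r = y # r'" using Cons by (cases r) auto
  have "inc (path_edges (y # r')) x = {}" using d Cons r by (intro inc_pe_notin) auto
  then show ?thesis using Cons r by (auto simp: inc_def)
qed simp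

lemma inc_pe_last: "distinct xs \<Longrightarrow> 2 \<le> length xs \<Longrightarrow>
    inc (path_edges xs) (last xs) = {{last xs, xs ! (length xs - 2)}}"
  using inc_pe_hd[of "rev xs"] by (simp add: hd_rev rev_nth numeral_2_eq_2)

lemma inc_pe_mid:
  assumes d: "distinct xs" and i: "0 < i" "i + 1 < length xs"
  shows "inc (path_edges xs) (xs ! i) = {{xs ! (i - 1), xs ! i}, {xs ! i, xs ! (i + 1)}}"
proof (intro set_eqI iffI)
  fix g assume "g \<in> inc (path_edges xs) (xs ! i)"
  then obtain k where k: "g = {xs ! k, xs ! (k + 1)}" "k + 1 < length xs" "xs ! i \<in> g"
    by (auto simp: inc_def path_edges_def)
  then have "xs ! i = xs ! k \<or> xs ! i = xs ! (k + 1)" by auto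
  then have "i = k \<or> i = k + 1" using d i k(2) by (auto simp: nth_eq_iff_index_eq)
  then show "g \<in> {{xs ! (i - 1), xs ! i}, {xs ! i, xs ! (i + 1)}}" using k by auto
next
  fix g assume "g \<in> {{xs ! (i - 1), xs ! i}, {xs ! i, xs ! (i + 1)}}"
  then show "g \<in> inc (path_edges xs) (xs ! i)"
    using pe_nth[of "i - 1" xs] pe_nth[of i xs] i by (auto simp: inc_def)
qed

lemma card_inc_pe_mid:
  assumes d: "distinct xs" and i: "0 < i" "i + 1 < length xs"
  shows "card (inc (path_edges xs) (xs ! i)) = 2"
proof -
  have "xs ! (i - 1) \<noteq> xs ! (i + 1)" "xs ! (i - 1) \<noteq> xs ! i" "xs ! i \<noteq> xs ! (i + 1)"
    using d i by (auto simp: nth_eq_iff_index_eq)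
  then have "{xs ! (i - 1), xs ! i} \<noteq> {xs ! i, xs ! (i + 1)}" by (auto simp: doubleton_eq_iff)
  then show ?thesis using inc_pe_mid[OF assms] by simp
qed

lemma card_inc_pe_end:
  assumes d: "distinct xs" and l: "2 \<le> length xs" and z: "z = hd xs \<or> z = last xs"
  shows "card (inc (path_edges xs) z) = 1"
  using z inc_pe_hd[OF d l] inc_pe_last[OF d l] by auto

lemma card_inc_ce:
  assumes d: "distinct xs" and l: "3 \<le> length xs" and z: "z \<in> set xs"
  shows "card (inc (cycle_edges xs) z) = 2"
proof -
  have ne: "xs \<noteq> []" using l by auto
  have ce: "cycle_edges xs = insert {last xs, hd xs} (path_edges xs)" using ce_pe[OF ne] .
  obtain i where i: "i < length xs" "z = xs ! i" using z by (auto simp: in_set_conv_nth)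
  have hd: "hd xs = xs ! 0" and lst: "last xs = xs ! (length xs - 1)"
    using ne by (simp_all add: hd_conv_nth last_conv_nth)
  consider "i = 0" | "i = length xs - 1" | "0 < i \<and> i + 1 < length xs" using i by linarith
  then show ?thesis
  proof cases
    case 1
    have "inc (cycle_edges xs) z = {{hd xs, xs ! 1}, {last xs, hd xs}}"
      using inc_pe_hd[OF d] l ce 1 i hd by (auto simp: inc_def)
    moreover have "xs ! 1 \<noteq> xs ! (length xs - 1)" "xs ! 0 \<noteq> xs ! 1"
      using dnth[OF d, of 0 1] dnth[OF d, of 1 "length xs - 1"] l ne by (simp_all del: One_nat_def)
    then have "xs ! 1 \<noteq> last xs" "hd xs \<noteq> xs ! 1" using lst hd by simp_all
    ultimately show ?thesis by (auto simp: doubleton_eq_iff)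
  next
    case 2
    have "inc (cycle_edges xs) z = {{last xs, xs ! (length xs - 2)}, {last xs, hd xs}}"
      using inc_pe_last[OF d] l ce 2 i lst by (auto simp: inc_def)
    moreover have "xs ! (length xs - 2) \<noteq> xs ! 0" "xs ! (length xs - 1) \<noteq> xs ! 0"
        "xs ! (length xs - 1) \<noteq> xs ! (length xs - 2)"
      using dnth[OF d, of "length xs - 2" 0] dnth[OF d, of "length xs - 1" 0] dnth[OF d, of "length xs - 1" "length xs - 2"] l ne by (simp_all del: One_nat_def)
    then have "xs ! (length xs - 2) \<noteq> hd xs" "last xs \<noteq> hd xs" "last xs \<noteq> xs ! (length xs - 2)"
      using lst hd by simp_all
    ultimately show ?thesis by (auto simp: doubleton_eq_iff)
  next
    case 3
    have "xs ! i \<noteq> xs ! (length xs - 1)" by (rule dnth[OF d]) (use i 3 in auto)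
    moreover have "xs ! i \<noteq> xs ! 0" by (rule dnth[OF d]) (use i 3 in auto)
    ultimately have "z \<noteq> xs ! (length xs - 1)" "z \<noteq> xs ! 0" using i by auto
    then have "z \<notin> {last xs, hd xs}" using lst hd by simp
    then have "inc (cycle_edges xs) z = inc (path_edges xs) z" using ce by (auto simp: inc_def)
    then show ?thesis using card_inc_pe_mid[OF d] 3 i by simp
  qed
qed

lemma alt_walk:
  fixes \<theta> :: "'a \<Rightarrow> 'k::field"
  assumes tw: "twosets F" and z: "\<forall>g\<in>F. sum \<theta> g = 0"
  shows "xs \<noteq> [] \<Longrightarrow> path_edges xs \<subseteq> F \<Longrightarrow> \<theta> (last xs) = (-1) ^ (length xs - 1) * \<theta> (hd xs)"
proof (induction xs)
  case Nil then show ?case by simp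
next
  case (Cons x xs)
  show ?case
  proof (cases "xs = []")
    case True then show ?thesis by simp
  next
    case False
    have e: "{x, hd xs} \<in> F" and p: "path_edges xs \<subseteq> F" using Cons(3) False by (auto simp: pe_Cons)
    have "x \<noteq> hd xs" using twosets_neq[OF tw e] .
    then have "\<theta> x + \<theta> (hd xs) = 0" using z e by auto
    then have h: "\<theta> (hd xs) = - \<theta> x" by (simp add: add_eq_0_iff)
    obtain n where n: "length xs = Suc n" using False by (cases xs) auto
    show ?thesis using Cons.IH[OF False p] h False n by simp
  qed
qed

definition conn :: "'a set set \<Rightarrow> 'a \<Rightarrow> 'a \<Rightarrow> bool" where
  "conn F x y \<longleftrightarrow> (\<exists>xs. xs \<noteq> [] \<and> hd xs = x \<and> last xs = y \<and> path_edges xs \<subseteq> F)"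

lemma conn_refl: "conn F x x"
  unfolding conn_def by (auto intro!: exI[of _ "[x]"])

lemma conn_ext: "conn F x y \<Longrightarrow> {y, z} \<in> F \<Longrightarrow> conn F x z"
proof -
  assume "conn F x y" "{y, z} \<in> F"
  then obtain xs where xs: "xs \<noteq> []" "hd xs = x" "last xs = y" "path_edges xs \<subseteq> F"
    by (auto simp: conn_def)
  then show ?thesis using \<open>{y, z} \<in> F\<close> unfolding conn_def
    by (intro exI[of _ "xs @ [z]"]) (auto simp: pe_snoc)
qed

lemma set_sub_pe: "xs \<noteq> [] \<Longrightarrow> set xs \<subseteq> insert (hd xs) (\<Union>(path_edges xs))"
proof (induction xs)
  case (Cons x xs)
  then show ?case by (cases "xs = []") (auto simp: pe_Cons)
qed simp

lemma double_count:
  assumes "finite C" "finite F"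
  shows "(\<Sum>z\<in>C. card (inc F z)) = (\<Sum>g\<in>F. card (g \<inter> C))"
proof -
  have "(\<Sum>z\<in>C. card (inc F z)) = (\<Sum>z\<in>C. \<Sum>g\<in>F. if z \<in> g then 1 else 0)"
    using assms by (simp add: inc_def sum.inter_filter[symmetric])
  also have "\<dots> = (\<Sum>g\<in>F. \<Sum>z\<in>C. if z \<in> g then 1 else 0)" by (rule sum.swap)
  also have "\<dots> = (\<Sum>g\<in>F. card (g \<inter> C))"
  proof (intro sum.cong refl)
    fix g
    have "g \<inter> C = {z \<in> C. z \<in> g}" by auto
    then show "(\<Sum>z\<in>C. if z \<in> g then 1 else 0) = card (g \<inter> C)"
      using assms by (simp add: sum.inter_filter[symmetric])
  qed
  finally show ?thesis .
qed

lemma even_cycle: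
  assumes fF: "finite F" and tw: "twosets F" and ev: "\<And>z. even (card (inc F z))"
    and ab: "{a, b} \<in> F" "a \<noteq> b"
  shows "\<exists>xs. distinct xs \<and> 3 \<le> length xs \<and> hd xs = a \<and> last xs = b \<and>
              path_edges xs \<subseteq> F - {{a, b}}"
proof -
  define F' where "F' = F - {{a, b}}"
  define C where "C = {z. conn F' a z}"
  have bC: "b \<in> C"
  proof (rule ccontr)
    assume nb: "b \<notin> C"
    have aC: "a \<in> C" by (simp add: C_def conn_refl)
    have fF': "finite F'" using fF by (simp add: F'_def)
    have twF': "twosets F'" using tw by (rule twosets_subset) (auto simp: F'_def)
    have "C \<subseteq> insert a (\<Union>F')"
    proof
      fix z assume "z \<in> C"
      then obtain xs where xs: "xs \<noteq> []" "hd xs = a" "last xs = z" "path_edges xs \<subseteq> F'"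
        by (auto simp: C_def conn_def)
      have "z \<in> set xs" using xs by auto
      then show "z \<in> insert a (\<Union>F')" using set_sub_pe[OF xs(1)] xs by auto
    qed
    moreover have "finite (\<Union>F')" using fF' twosets_finite[OF twF'] by auto
    ultimately have fC: "finite C" by (meson finite_insert finite_subset)
    have clos: "g \<subseteq> C \<or> g \<inter> C = {}" if g: "g \<in> F'" for g
    proof -
      obtain x y where xy: "g = {x, y}" using twF' g by (auto simp: twosets_def)
      have "x \<in> C \<longleftrightarrow> y \<in> C"
        using g xy conn_ext[of F' a x y] conn_ext[of F' a y x]
        by (auto simp: C_def insert_commute)
      then show ?thesis using xy by auto
    qed
    have rhs: "even (\<Sum>g\<in>F'. card (g \<inter> C))"
    proof (intro dvd_sum)
      fix g assume g: "g \<in> F'"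
      show "even (card (g \<inter> C))"
        using clos[OF g] twosets_card[OF twF' g] by (auto simp: Int_absorb2)
    qed
    have inca: "card (inc F' a) + 1 = card (inc F a)"
    proof -
      have "inc F a = insert {a, b} (inc F' a)" "{a, b} \<notin> inc F' a"
        using ab by (auto simp: inc_def F'_def)
      moreover have "finite (inc F' a)" using fF by (simp add: inc_def F'_def)
      ultimately show ?thesis by simp
    qed
    have oth: "inc F' z = inc F z" if "z \<in> C - {a}" for z
      using that nb by (auto simp: inc_def F'_def)
    have "(\<Sum>z\<in>C. card (inc F' z)) = card (inc F' a) + (\<Sum>z\<in>C - {a}. card (inc F z))"
      using fC aC by (simp add: sum.remove oth)
    moreover have "even (\<Sum>z\<in>C - {a}. card (inc F z))" by (intro dvd_sum ev)
    moreover have "odd (card (inc F' a))" using inca ev[of a] by presburger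
    ultimately have "odd (\<Sum>z\<in>C. card (inc F' z))" by simp
    then show False using rhs double_count[OF fC fF'] by simp
  qed
  then obtain xs where xs: "xs \<noteq> []" "hd xs = a" "last xs = b" "path_edges xs \<subseteq> F'"
    by (auto simp: C_def conn_def)
  obtain ys where ys: "ys \<noteq> []" "distinct ys" "hd ys = a" "last ys = b" "path_edges ys \<subseteq> F'"
    using walk_to_path[OF xs(1)] xs by blast
  have "length ys \<noteq> 1" using ys ab by (cases ys) auto
  moreover have "length ys \<noteq> 2"
  proof
    assume "length ys = 2"
    then obtain p q where "ys = [p, q]" by (cases ys; cases "tl ys") auto
    then show False using ys by (auto simp: F'_def)
  qed
  moreover have "length ys \<noteq> 0" using ys(1) by simp
  ultimately have "3 \<le> length ys" by linarith
  then show ?thesis using ys F'_def by blast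
qed


lemma sq_ne0: "((x::'k::field)\<^sup>2 \<noteq> 0) \<longleftrightarrow> x \<noteq> 0"
  by simp

lemma sum_pair: "x \<noteq> y \<Longrightarrow> sum f {x, y} = f x + f y"
  by simp

lemma inc_diff: "inc (F - A) z = inc F z - inc A z"
  by (auto simp: inc_def)

lemma card_inc_diff: "finite F \<Longrightarrow> A \<subseteq> F \<Longrightarrow> card (inc (F - A) z) = card (inc F z) - card (inc A z)"
  unfolding inc_diff by (rule card_Diff_subset) (auto simp: inc_def intro: finite_subset)

lemma inc_mono: "A \<subseteq> F \<Longrightarrow> inc A z \<subseteq> inc F z"
  by (auto simp: inc_def)

lemma finite_inc: "finite F \<Longrightarrow> finite (inc F z)"
  by (simp add: inc_def)

lemma hd_notin_tl: "distinct xs \<Longrightarrow> hd xs \<notin> set (tl xs)"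
  by (cases xs) auto

lemma hd_notin_drop: "distinct xs \<Longrightarrow> 0 < j \<Longrightarrow> hd xs \<notin> set (drop j xs)"
proof (cases xs)
  case (Cons x r)
  assume "distinct xs" "0 < j"
  then show ?thesis using Cons set_drop_subset[of "j - 1" r] by (cases j) auto
qed simp

lemma butlast_tl_mem: "distinct xs \<Longrightarrow> x \<in> set (butlast (tl xs)) \<Longrightarrow> x \<in> set xs \<and> x \<noteq> hd xs \<and> x \<noteq> last xs"
proof (cases xs)
  case (Cons y r)
  assume d: "distinct xs" and x: "x \<in> set (butlast (tl xs))"
  then have xr: "x \<in> set (butlast r)" using Cons by simp
  then have "r \<noteq> []" by auto
  then have "last xs = last r" using Cons by simp
  moreover have "x \<in> set r" using xr in_set_butlastD by fast
  moreover have "x \<noteq> last r" using d Cons xr \<open>r \<noteq> []\<close>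
    by (metis append_butlast_last_id distinct.simps(2) distinct_append not_distinct_conv_prefix)
  ultimately show ?thesis using d Cons by auto
qed simp

lemma mid_index: "distinct xs \<Longrightarrow> z \<in> set xs \<Longrightarrow> z \<noteq> hd xs \<Longrightarrow> z \<noteq> last xs \<Longrightarrow>
   \<exists>i. 0 < i \<and> i + 1 < length xs \<and> z = xs ! i"
proof -
  assume d: "distinct xs" and z: "z \<in> set xs" "z \<noteq> hd xs" "z \<noteq> last xs"
  obtain i where i: "i < length xs" "z = xs ! i" using z by (auto simp: in_set_conv_nth)
  have ne: "xs \<noteq> []" using z by auto
  have "i \<noteq> 0"
  proof
    assume "i = 0" then have "z = hd xs" using i ne by (simp add: hd_conv_nth)
    then show False using z by simp
  qed
  moreover have "i \<noteq> length xs - 1" using i z ne by (auto simp: last_conv_nth)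
  ultimately show ?thesis using i by (intro exI[of _ i]) auto
qed

lemma card_inc_pe_cases:
  assumes d: "distinct xs" and l: "2 \<le> length xs"
  shows "card (inc (path_edges xs) z) = (if z \<notin> set xs then 0 else if z = hd xs \<or> z = last xs then 1 else 2)"
proof (cases "z \<in> set xs")
  case False then show ?thesis by (simp add: inc_pe_notin)
next
  case True
  show ?thesis
  proof (cases "z = hd xs \<or> z = last xs")
    case True then show ?thesis using card_inc_pe_end[OF d l] \<open>z \<in> set xs\<close> by auto
  next
    case False
    then obtain i where "0 < i" "i + 1 < length xs" "z = xs ! i"
      using mid_index[OF d \<open>z \<in> set xs\<close>] by auto
    then show ?thesis using card_inc_pe_mid[OF d] False \<open>z \<in> set xs\<close> by auto
  qed
qed

lemma card_inc_ce_cases: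
  assumes d: "distinct xs" and l: "3 \<le> length xs"
  shows "card (inc (cycle_edges xs) z) = (if z \<in> set xs then 2 else 0)"
  using card_inc_ce[OF d l] inc_ce_notin[of z xs] by auto

lemma deg_cases:
  fixes d :: "'a \<Rightarrow> nat"
  assumes fV: "finite V" and ge: "\<forall>z\<in>V. 2 \<le> d z" and sm: "(\<Sum>z\<in>V. d z) = 2 * card V + 2"
  shows "(\<exists>v\<in>V. d v = 4 \<and> (\<forall>z\<in>V. z \<noteq> v \<longrightarrow> d z = 2)) \<or>
         (\<exists>u\<in>V. \<exists>w\<in>V. u \<noteq> w \<and> d u = 3 \<and> d w = 3 \<and> (\<forall>z\<in>V. z \<noteq> u \<and> z \<noteq> w \<longrightarrow> d z = 2))"
proof -
  define h where "h z = d z - 2" for z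
  have "(\<Sum>z\<in>V. d z) = (\<Sum>z\<in>V. h z + 2)" using ge by (intro sum.cong) (auto simp: h_def)
  also have "\<dots> = (\<Sum>z\<in>V. h z) + 2 * card V" unfolding sum.distrib by simp
  finally have sh: "(\<Sum>z\<in>V. h z) = 2" using sm by simp
  obtain u where u: "u \<in> V" "h u \<noteq> 0"
  proof (rule ccontr)
    assume "\<not> thesis"
    then have "\<forall>z\<in>V. h z = 0" using that by blast
    then show False using sh by simp
  qed
  have su: "h u + (\<Sum>z\<in>V - {u}. h z) = 2" using sh fV u(1) by (simp add: sum.remove)
  have dz: "d z = h z + 2" if "z \<in> V" for z using ge that by (auto simp: h_def)
  consider "h u = 2" | "h u = 1" using su u(2) by linarith
  then show ?thesis
  proof cases
    case 1
    then have "(\<Sum>z\<in>V - {u}. h z) = 0" using su by simp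
    then have "\<forall>z\<in>V - {u}. h z = 0" using fV by simp
    then show ?thesis using 1 u dz by (intro disjI1 bexI[of _ u]) auto
  next
    case 2
    then have s1: "(\<Sum>z\<in>V - {u}. h z) = 1" using su by simp
    obtain w where w: "w \<in> V - {u}" "h w \<noteq> 0"
    proof (rule ccontr)
      assume "\<not> thesis"
      then have "\<forall>z\<in>V - {u}. h z = 0" using that by blast
      then show False using s1 by simp
    qed
    have "h w + (\<Sum>z\<in>V - {u} - {w}. h z) = 1" using s1 fV w(1) by (simp add: sum.remove)
    then have "h w = 1" "(\<Sum>z\<in>V - {u} - {w}. h z) = 0" using w(2) by linarith+
    then have "\<forall>z\<in>V - {u} - {w}. h z = 0" "h w = 1" using fV by simp_all
    then show ?thesis using 2 u w dz by (intro disjI2 bexI[of _ u] bexI[of _ w]) auto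
  qed
qed

lemma edge_at: "twosets F \<Longrightarrow> g \<in> F \<Longrightarrow> v \<in> g \<Longrightarrow> \<exists>a. a \<noteq> v \<and> g = {v, a}"
  unfolding twosets_def by fastforce

lemma card_eq_sub: "A \<subseteq> B \<Longrightarrow> finite B \<Longrightarrow> card B \<le> card A \<Longrightarrow> B \<subseteq> A"
proof -
  assume a: "A \<subseteq> B" "finite B" "card B \<le> card A"
  then have "card A = card B" using card_mono[OF a(2) a(1)] by simp
  then show ?thesis using card_subset_eq[OF a(2) a(1)] by simp
qed

context
  fixes V :: "'a set" and E :: "'a set set"
  assumes sg: "simple_graph V E" and cg: "connected_graph V E" and cE: "card E = card V + 1"
    and p2: "two_edge_support TYPE('k::field) V E" and two: "(2::'k) \<noteq> 0"
begin

lemma fV: "finite V" using sg by (simp add: simple_graph_def)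

lemma tw: "twosets E" using sg unfolding simple_graph_def twosets_def by blast

lemma EV: "g \<in> E \<Longrightarrow> g \<subseteq> V" using sg by (auto simp: simple_graph_def)

lemma fE: "finite E"
proof -
  have "E \<subseteq> Pow V" using EV by auto
  then show ?thesis using fV by (meson finite_Pow_iff finite_subset)
qed

lemma inc_outside: "z \<notin> V \<Longrightarrow> inc E z = {}"
  using EV by (auto simp: inc_def)

lemma P2':
  assumes "e1 \<in> E" "e2 \<in> E" "e1 \<noteq> e2"
  shows "\<exists>\<theta> :: 'a \<Rightarrow> 'k. in_U V \<theta> \<and> (\<forall>g\<in>E. sum \<theta> g \<noteq> 0 \<longleftrightarrow> g = e1 \<or> g = e2)"
proof -
  obtain \<theta> :: "'a \<Rightarrow> 'k" where th: "in_U V \<theta>" "support E (square E \<theta>) = {e1, e2}"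
    using p2 assms unfolding two_edge_support_def by blast
  have "\<forall>g\<in>E. sum \<theta> g \<noteq> 0 \<longleftrightarrow> g = e1 \<or> g = e2"
  proof
    fix g assume g: "g \<in> E"
    have "g \<in> support E (square E \<theta>) \<longleftrightarrow> sum \<theta> g \<noteq> 0"
      using g by (simp add: support_def square_def)
    then show "sum \<theta> g \<noteq> 0 \<longleftrightarrow> g = e1 \<or> g = e2" using th(2) by auto
  qed
  then show ?thesis using th(1) by blast
qed

lemma even_walk:
  assumes e1: "e1 \<in> E" and e2: "e2 \<in> E" and ne: "e1 \<noteq> e2" and exy: "e1 = {x, y}"
    and xs: "xs \<noteq> []" "hd xs = x" "last xs = y" "path_edges xs \<subseteq> E - {e1, e2}"
  shows "odd (length xs)"
proof -
  obtain \<theta> :: "'a \<Rightarrow> 'k" where th: "\<forall>g\<in>E. sum \<theta> g \<noteq> 0 \<longleftrightarrow> g = e1 \<or> g = e2"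
    using P2'[OF e1 e2 ne] by blast
  have twF: "twosets (E - {e1, e2})" using tw by (rule twosets_subset) auto
  have z: "\<forall>g\<in>E - {e1, e2}. sum \<theta> g = 0" using th by auto
  have alt: "\<theta> y = (-1) ^ (length xs - 1) * \<theta> x"
    using alt_walk[OF twF z xs(1) xs(4)] xs by simp
  have xy: "x \<noteq> y" using twosets_neq[OF tw] e1 exy by blast
  have s: "\<theta> x + \<theta> y \<noteq> 0" using th e1 exy xy by auto
  show ?thesis
  proof (rule ccontr)
    assume "\<not> odd (length xs)"
    then have "odd (length xs - 1)" using xs(1) by (cases xs) auto
    then have "\<theta> y = - \<theta> x" using alt by simp
    then show False using s by simp
  qed
qed

lemma not_edge_square: "\<not> edge_square TYPE('k) V E"
proof
  assume es: "edge_square TYPE('k) V E"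
  have "card E \<le> card V"
  proof (rule dim_bound[where 'k = 'k])
    show "finite V" by (rule fV)
    show "finite E" by (rule fE)
    show "finite g" if "g \<in> E" for g using twosets_finite[OF tw that] .
    fix f assume f: "f \<in> E"
    then obtain \<theta> :: "'a \<Rightarrow> 'k" where th: "in_U V \<theta>" "square E \<theta> = edge_vec f"
      using es unfolding edge_square_def by blast
    have "\<forall>g\<in>E. sum \<theta> g = 0 \<longleftrightarrow> g \<noteq> f"
    proof
      fix g assume g: "g \<in> E"
      have "square E \<theta> g = (sum \<theta> g)\<^sup>2" using g by (simp add: square_def)
      then have "(sum \<theta> g)\<^sup>2 = (if g = f then 1 else 0)" using th(2) by (simp add: edge_vec_def)
      then show "sum \<theta> g = 0 \<longleftrightarrow> g \<noteq> f" by (cases "g = f") auto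
    qed
    then show "\<exists>\<theta> :: 'a \<Rightarrow> 'k. in_U V \<theta> \<and> (\<forall>g\<in>E. sum \<theta> g = 0 \<longleftrightarrow> g \<noteq> f)" using th(1) by blast
  qed
  then show False using cE by simp
qed

lemma rt_conn:
  assumes "(\<lambda>a b. a \<in> V \<and> b \<in> V \<and> adjacent E a b)\<^sup>*\<^sup>* x y"
  shows "conn E x y"
  using assms
proof (induction rule: rtranclp_induct)
  case base then show ?case by (rule conn_refl)
next
  case (step y z) then show ?case by (auto intro: conn_ext simp: adjacent_def)
qed

lemma cardV2: "2 \<le> card V"
proof (rule ccontr)
  assume "\<not> 2 \<le> card V"
  then have "card V \<le> 1" by simp
  have "E = {}"
  proof (rule ccontr)
    assume "E \<noteq> {}"
    then obtain g where "g \<in> E" by auto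
    then obtain x y where "x \<noteq> y" "g = {x, y}" using tw by (auto simp: twosets_def)
    then have "{x, y} \<subseteq> V" using EV \<open>g \<in> E\<close> by auto
    then have "card {x, y} \<le> card V" using fV by (rule card_mono[rotated])
    then show False using \<open>x \<noteq> y\<close> \<open>card V \<le> 1\<close> by simp
  qed
  then show False using cE by simp
qed

lemma deg_ge2:
  assumes zV: "z \<in> V"
  shows "2 \<le> card (inc E z)"
proof -
  have ne: "inc E z \<noteq> {}"
  proof -
    obtain z' where z': "z' \<in> V" "z' \<noteq> z"
    proof (rule ccontr)
      assume "\<not> thesis"
      then have "V \<subseteq> {z}" using that by auto
      then have "card V \<le> 1" using card_mono[of "{z}" V] by simp
      then show False using cardV2 by simp
    qed
    have "(\<lambda>a b. a \<in> V \<and> b \<in> V \<and> adjacent E a b)\<^sup>*\<^sup>* z z'"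
      using cg zV z' by (auto simp: connected_graph_def)
    then show ?thesis
    proof (cases rule: converse_rtranclpE)
      case base then show ?thesis using z' by simp
    next
      case (step y) then show ?thesis by (auto simp: inc_def adjacent_def)
    qed
  qed
  have "card (inc E z) \<noteq> 1"
  proof
    assume "card (inc E z) = 1"
    then obtain e where ie: "inc E z = {e}" by (auto simp: card_Suc_eq)
    then have eE: "e \<in> E" and ze: "z \<in> e" by (auto simp: inc_def)
    have only: "g \<in> E \<Longrightarrow> z \<in> g \<Longrightarrow> g = e" for g using ie by (auto simp: inc_def)
    have "card (E - {e}) \<le> card (V - {z})"
    proof (rule dim_bound[where 'k = 'k])
      show "finite (V - {z})" using fV by simp
      show "finite (E - {e})" using fE by simp
      show "finite g" if "g \<in> E - {e}" for g using twosets_finite[OF tw] that by auto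
      fix f assume f: "f \<in> E - {e}"
      obtain \<theta> :: "'a \<Rightarrow> 'k" where th: "in_U V \<theta>" "\<forall>g\<in>E. sum \<theta> g \<noteq> 0 \<longleftrightarrow> g = e \<or> g = f"
        using P2'[OF eE, of f] f by auto
      define \<theta>' where "\<theta>' = \<theta>(z := 0)"
      have "in_U (V - {z}) \<theta>'" using th(1) by (auto simp: in_U_def \<theta>'_def)
      moreover have "\<forall>g\<in>E - {e}. sum \<theta>' g = 0 \<longleftrightarrow> g \<noteq> f"
      proof
        fix g assume g: "g \<in> E - {e}"
        then have "z \<notin> g" using only by auto
        then have "sum \<theta>' g = sum \<theta> g" by (intro sum.cong) (auto simp: \<theta>'_def)
        then show "sum \<theta>' g = 0 \<longleftrightarrow> g \<noteq> f" using th(2) g by auto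
      qed
      ultimately show "\<exists>\<theta> :: 'a \<Rightarrow> 'k. in_U (V - {z}) \<theta> \<and> (\<forall>g\<in>E - {e}. sum \<theta> g = 0 \<longleftrightarrow> g \<noteq> f)"
        by blast
    qed
    moreover have "card V > 0" using fV zV card_gt_0_iff by blast
    ultimately show False using cE zV eE fV fE by (simp add: card_Diff_singleton)
  qed
  moreover have "card (inc E z) \<noteq> 0" using ne fE by (simp add: finite_inc)
  ultimately show ?thesis by linarith
qed

lemma handshake: "(\<Sum>z\<in>V. card (inc E z)) = 2 * card E"
proof -
  have "(\<Sum>z\<in>V. card (inc E z)) = (\<Sum>g\<in>E. card (g \<inter> V))" by (rule double_count[OF fV fE])
  also have "\<dots> = (\<Sum>g\<in>E. 2)"
  proof (intro sum.cong refl)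
    fix g assume "g \<in> E"
    then show "card (g \<inter> V) = 2" using EV twosets_card[OF tw] by (simp add: Int_absorb2)
  qed
  finally show ?thesis by simp
qed


lemma closure:
  assumes v0: "v0 \<in> H" and HV: "H \<subseteq> V" and EH: "EH \<subseteq> E"
    and incH: "\<forall>z\<in>H. inc E z \<subseteq> EH" and EHH: "\<forall>g\<in>EH. g \<subseteq> H"
  shows "V = H \<and> E = EH"
proof -
  have "y \<in> H" if y: "y \<in> V" for y
  proof -
    have "(\<lambda>a b. a \<in> V \<and> b \<in> V \<and> adjacent E a b)\<^sup>*\<^sup>* v0 y"
      using cg v0 HV y by (auto simp: connected_graph_def)
    then show ?thesis
    proof (induction rule: rtranclp_induct)
      case base then show ?case by (rule v0)
    next
      case (step x y')
      then have "{x, y'} \<in> inc E x" by (auto simp: adjacent_def inc_def)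
      then have "{x, y'} \<in> EH" using incH step by auto
      then show ?case using EHH by auto
    qed
  qed
  then have VH: "V = H" using HV by auto
  have "g \<in> EH" if g: "g \<in> E" for g
  proof -
    obtain x y where "g = {x, y}" using tw g by (auto simp: twosets_def)
    then have "x \<in> H" "g \<in> inc E x" using EV g VH by (auto simp: inc_def)
    then show ?thesis using incH by auto
  qed
  then show ?thesis using VH EH by auto
qed

lemma set_in_V: "xs \<noteq> [] \<Longrightarrow> hd xs \<in> V \<Longrightarrow> path_edges xs \<subseteq> E \<Longrightarrow> set xs \<subseteq> V"
  using set_sub_pe[of xs] EV by blast

lemma caseA:
  assumes vV: "v \<in> V" and d4: "card (inc E v) = 4" and d2: "\<forall>z\<in>V. z \<noteq> v \<longrightarrow> card (inc E z) = 2"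
  shows "doubly_odd_paddle V E"
proof -
  have evE: "even (card (inc E z))" for z
    using d4 d2 inc_outside by (cases "z \<in> V"; cases "z = v") auto
  obtain a where a: "a \<noteq> v" "{v, a} \<in> E"
  proof -
    have "inc E v \<noteq> {}" using d4 by auto
    then obtain g where "g \<in> E" "v \<in> g" by (auto simp: inc_def)
    then show ?thesis using edge_at[OF tw] that by blast
  qed
  obtain xs1 where x1: "distinct xs1" "3 \<le> length xs1" "hd xs1 = v" "last xs1 = a"
      "path_edges xs1 \<subseteq> E - {{v, a}}"
    using even_cycle[OF fE tw evE a(2)] a(1) by blast
  define C1 where "C1 = cycle_edges xs1"
  have ne1: "xs1 \<noteq> []" using x1 by auto
  have C1: "C1 = insert {v, a} (path_edges xs1)" using ce_pe[OF ne1] x1 by (simp add: C1_def insert_commute)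
  have C1E: "C1 \<subseteq> E" using C1 x1 a by auto
  have s1V: "set xs1 \<subseteq> V" using set_in_V[OF ne1] x1 vV by auto
  have v1: "v \<in> set xs1" using x1 ne1 by auto
  define F' where "F' = E - C1"
  have fF': "finite F'" using fE by (simp add: F'_def)
  have twF': "twosets F'" using tw by (rule twosets_subset) (auto simp: F'_def)
  have dF': "card (inc F' z) = card (inc E z) - (if z \<in> set xs1 then 2 else 0)" for z
    using card_inc_diff[OF fE C1E, of z] card_inc_ce_cases[OF x1(1) x1(2), of z] by (simp add: F'_def C1_def)
  have evF': "even (card (inc F' z))" for z
  proof -
    have "even (card (inc E z) - 2)" using evE[of z] by presburger
    then show ?thesis using dF'[of z] evE[of z] by (cases "z \<in> set xs1") auto
  qed
  have F'0: "card (inc F' z) = 0" if "z \<in> set xs1" "z \<noteq> v" for z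
    using dF'[of z] d2 s1V that by auto
  have dF'v: "card (inc F' v) = 2" using dF'[of v] d4 v1 by simp
  obtain b where b: "b \<noteq> v" "{v, b} \<in> F'"
  proof -
    have "inc F' v \<noteq> {}" using dF'v by auto
    then obtain g where "g \<in> F'" "v \<in> g" by (auto simp: inc_def)
    then show ?thesis using edge_at[OF twF'] that by blast
  qed
  obtain xs2 where x2: "distinct xs2" "3 \<le> length xs2" "hd xs2 = v" "last xs2 = b"
      "path_edges xs2 \<subseteq> F' - {{v, b}}"
    using even_cycle[OF fF' twF' evF' b(2)] b(1) by blast
  define C2 where "C2 = cycle_edges xs2"
  have ne2: "xs2 \<noteq> []" using x2 by auto
  have C2: "C2 = insert {v, b} (path_edges xs2)" using ce_pe[OF ne2] x2 by (simp add: C2_def insert_commute)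
  have C2F': "C2 \<subseteq> F'" using C2 x2 b by auto
  have C2E: "C2 \<subseteq> E" using C2F' by (auto simp: F'_def)
  have s2V: "set xs2 \<subseteq> V" using set_in_V[OF ne2] x2 vV C2E C2 by auto
  have v2: "v \<in> set xs2" using x2 ne2 by auto
  have inter: "set xs1 \<inter> set xs2 = {v}"
  proof -
    have False if z: "z \<in> set xs1" "z \<in> set xs2" "z \<noteq> v" for z
    proof -
      have "card (inc C2 z) = 2" using card_inc_ce[OF x2(1) x2(2) z(2)] by (simp add: C2_def)
      moreover have "card (inc C2 z) \<le> card (inc F' z)"
        using C2F' fF' by (intro card_mono finite_inc inc_mono) auto
      ultimately show False using F'0[OF z(1) z(3)] by simp
    qed
    then show ?thesis using v1 v2 by auto
  qed
  have disj: "C1 \<inter> C2 = {}" using C2F' by (auto simp: F'_def)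
  have va1: "{v, a} \<in> C1" using C1 by simp
  have vb2: "{v, b} \<in> C2" using C2 by simp
  have neab: "{v, a} \<noteq> {v, b}" using va1 vb2 disj by auto
  have odd1: "odd (length xs1)"
    by (rule even_walk[OF a(2) _ neab refl ne1 x1(3) x1(4)]) (use C2E vb2 x1 disj C1 in auto)
  have odd2: "odd (length xs2)"
    by (rule even_walk[OF _ a(2) neab[symmetric] refl ne2 x2(3) x2(4)]) (use C2E vb2 x2 disj C1 F'_def in auto)
  have VE: "V = set xs1 \<union> set xs2 \<and> E = C1 \<union> C2"
  proof (rule closure[OF _ _ _ _])
    show "v \<in> set xs1 \<union> set xs2" using v1 by simp
    show "set xs1 \<union> set xs2 \<subseteq> V" using s1V s2V by simp
    show "C1 \<union> C2 \<subseteq> E" using C1E C2E by simp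
    show "\<forall>g\<in>C1 \<union> C2. g \<subseteq> set xs1 \<union> set xs2" using ce_sub_set C1_def C2_def by blast
    show "\<forall>z\<in>set xs1 \<union> set xs2. inc E z \<subseteq> C1 \<union> C2"
    proof
      fix z assume z: "z \<in> set xs1 \<union> set xs2"
      have c1: "card (inc C1 z) = (if z \<in> set xs1 then 2 else 0)"
        using card_inc_ce_cases[OF x1(1) x1(2)] by (simp add: C1_def)
      have c2: "card (inc C2 z) = (if z \<in> set xs2 then 2 else 0)"
        using card_inc_ce_cases[OF x2(1) x2(2)] by (simp add: C2_def)
      have u: "inc (C1 \<union> C2) z = inc C1 z \<union> inc C2 z" by (auto simp: inc_def)
      have di: "inc C1 z \<inter> inc C2 z = {}" using disj by (auto simp: inc_def)
      have fi: "finite (inc C1 z)" "finite (inc C2 z)"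
        using C1E C2E fE by (auto intro: finite_inc finite_subset)
      have cu: "card (inc (C1 \<union> C2) z) = card (inc C1 z) + card (inc C2 z)"
        using card_Un_disjoint[OF fi(1) fi(2) di] by (simp add: u)
      have "card (inc E z) \<le> card (inc (C1 \<union> C2) z)"
      proof (cases "z = v")
        case True then show ?thesis using cu c1 c2 d4 v1 v2 by simp
      next
        case False
        then have "z \<in> V" "card (inc E z) = 2" using z s1V s2V d2 by auto
        moreover have "card (inc C1 z) = 2 \<or> card (inc C2 z) = 2" using c1 c2 z by auto
        ultimately show ?thesis using cu by linarith
      qed
      moreover have sub: "inc (C1 \<union> C2) z \<subseteq> inc E z" using C1E C2E by (intro inc_mono) auto
      ultimately have "inc E z \<subseteq> inc (C1 \<union> C2) z"
        using card_eq_sub[OF sub finite_inc[OF fE]] by blast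
      then show "inc E z \<subseteq> C1 \<union> C2" by (auto simp: inc_def)
    qed
  qed
  show ?thesis
    unfolding doubly_odd_paddle_def
    apply (rule exI[of _ xs1], rule exI[of _ xs2])
    using x1 x2 odd1 odd2 disj inter VE by (auto simp: is_cycle_def C1_def C2_def)
qed


lemma last_take_Suc: "j < length xs \<Longrightarrow> last (take (Suc j) xs) = xs ! j"
  by (simp add: take_Suc_conv_app_nth)

lemma caseB:
  assumes uV: "u \<in> V" and wV: "w \<in> V" and uw: "u \<noteq> w" and du: "card (inc E u) = 3"
    and dw: "card (inc E w) = 3" and d2: "\<forall>z\<in>V. z \<noteq> u \<and> z \<noteq> w \<longrightarrow> card (inc E z) = 2"
  shows "doubly_odd_paddle V E"
proof -
  have "conn E u w"
    using cg uV wV by (intro rt_conn) (auto simp: connected_graph_def)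
  then obtain W where W: "W \<noteq> []" "hd W = u" "last W = w" "path_edges W \<subseteq> E" by (auto simp: conn_def)
  obtain P where P: "P \<noteq> []" "distinct P" "hd P = u" "last P = w" "path_edges P \<subseteq> E"
    using walk_to_path[OF W(1)] W by blast
  have lP: "2 \<le> length P"
  proof (rule ccontr)
    assume "\<not> 2 \<le> length P"
    moreover have "length P \<noteq> 0" using P(1) by simp
    ultimately have "length P = 1" by linarith
    then obtain x where "P = [x]" by (auto simp: length_Suc_conv)
    then show False using P uw by simp
  qed
  have sPV: "set P \<subseteq> V" using set_in_V[OF P(1)] P uV by auto
  have uP: "u \<in> set P" and wP: "w \<in> set P" using P by auto
  define F where "F = E - path_edges P"
  have fF: "finite F" using fE by (simp add: F_def)
  have twF: "twosets F" using tw by (rule twosets_subset) (auto simp: F_def)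
  have FE: "F \<subseteq> E" by (auto simp: F_def)
  have dF: "card (inc F z) = card (inc E z) - card (inc (path_edges P) z)" for z
    using card_inc_diff[OF fE P(5)] by (simp add: F_def)
  have dFu: "card (inc F u) = 2" using dF[of u] du card_inc_pe_cases[OF P(2) lP, of u] uP P by simp
  have dFw: "card (inc F w) = 2" using dF[of w] dw card_inc_pe_cases[OF P(2) lP, of w] wP P by simp
  have dFmid: "card (inc F z) = 0" if "z \<in> set P" "z \<noteq> u" "z \<noteq> w" for z
    using dF[of z] d2 card_inc_pe_cases[OF P(2) lP, of z] that sPV P by auto
  have dFout: "card (inc F z) = (if z \<in> V then 2 else 0)" if "z \<notin> set P" for z
    using dF[of z] d2 card_inc_pe_cases[OF P(2) lP, of z] that uP wP inc_outside[of z] by auto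
  have leF: "card (inc F z) \<le> 2" for z
    using dFu dFw dFmid dFout by (cases "z \<in> set P"; cases "z = u"; cases "z = w") auto
  have evF: "even (card (inc F z))" for z
    using dFu dFw dFmid dFout by (cases "z \<in> set P"; cases "z = u"; cases "z = w") auto
  obtain a where a: "a \<noteq> u" "{u, a} \<in> F"
  proof -
    have "inc F u \<noteq> {}" using dFu by auto
    then obtain g where "g \<in> F" "u \<in> g" by (auto simp: inc_def)
    then show ?thesis using edge_at[OF twF] that by blast
  qed
  obtain xs1 where x1: "distinct xs1" "3 \<le> length xs1" "hd xs1 = u" "last xs1 = a"
      "path_edges xs1 \<subseteq> F - {{u, a}}"
    using even_cycle[OF fF twF evF a(2)] a(1) by blast
  define C1 where "C1 = cycle_edges xs1"
  have ne1: "xs1 \<noteq> []" using x1 by auto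
  have C1: "C1 = insert {u, a} (path_edges xs1)" using ce_pe[OF ne1] x1 by (simp add: C1_def insert_commute)
  have C1F: "C1 \<subseteq> F" using C1 x1 a by auto
  have C1E: "C1 \<subseteq> E" using C1F FE by auto
  have s1V: "set xs1 \<subseteq> V" using set_in_V[OF ne1] x1 uV C1E C1 by auto
  have u1: "u \<in> set xs1" using x1 ne1 by auto
  have uaE: "{u, a} \<in> E" using a FE by auto
  have w1: "w \<notin> set xs1"
  proof
    assume "w \<in> set xs1"
    then obtain j where j: "j < length xs1" "xs1 ! j = w" by (auto simp: in_set_conv_nth)
    have j0: "0 < j"
    proof (rule ccontr)
      assume "\<not> 0 < j"
      then have "j = 0" by simp
      then show False using j x1 ne1 uw by (simp add: hd_conv_nth)
    qed
    define l where "l = length xs1"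
    define m where "m = length P - 1"
    define eP where "eP = {u, P ! 1}"
    have eP_pe: "eP \<in> path_edges P" using pe_nth[of 0 P] lP P(1) P(3) by (simp add: eP_def hd_conv_nth)
    have ePE: "eP \<in> E" using eP_pe P(5) by auto
    have ePF: "eP \<notin> F" using eP_pe by (simp add: F_def)
    have ne_eP_ua: "eP \<noteq> {u, a}" using ePF a by auto
    have ltl: "length (tl P) = m" "1 \<le> length (tl P)" using lP by (simp_all add: m_def)
    have tlne: "tl P \<noteq> []"
    proof
      assume "tl P = []" then have "length (tl P) = 0" by simp
      then show False using ltl(2) by simp
    qed
    have tlP: "tl P \<noteq> []" "hd (tl P) = P ! 1" "last (tl P) = w" "length (tl P) = m"
      using tlne ltl P by (auto simp: hd_conv_nth nth_tl last_tl)
    have u_tlP: "u \<notin> set (tl P)" using hd_notin_tl[OF P(2)] P(3) by simp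
    have pe_tlP: "path_edges (tl P) \<subseteq> E - F - {eP}"
    proof
      fix g assume g: "g \<in> path_edges (tl P)"
      then have "g \<in> path_edges P" using pe_tl by blast
      moreover have "g \<noteq> eP" using pe_sub_set[OF g] u_tlP by (auto simp: eP_def)
      ultimately show "g \<in> E - F - {eP}" using P(5) by (auto simp: F_def)
    qed
    define Y where "Y = rev (take (Suc j) xs1)"
    have Y: "Y \<noteq> []" "hd Y = w" "last Y = u" "length Y = Suc j" "path_edges Y \<subseteq> path_edges xs1"
      using j ne1 x1 pe_take[of "Suc j" xs1]
      by (auto simp: Y_def hd_rev last_rev last_take_Suc)
    have tlY: "tl Y \<noteq> []" using Y j0 by (cases Y) auto
    define W1 where "W1 = tl P @ tl Y"
    have W1: "W1 \<noteq> []" "hd W1 = P ! 1" "last W1 = u" "length W1 = m + j"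
      using tlP tlY Y by (auto simp: W1_def last_tl)
    have peW1: "path_edges W1 = path_edges (tl P) \<union> path_edges Y"
      unfolding W1_def by (rule pe_join) (use tlP Y in auto)
    have s1: "path_edges W1 \<subseteq> E - {eP, {u, a}}"
      unfolding peW1 using pe_tlP Y(5) x1(5) ePF a(2) FE by blast
    have exy1: "eP = {P ! 1, u}" by (simp add: eP_def insert_commute)
    have o1: "odd (m + j)"
      using even_walk[OF ePE uaE ne_eP_ua exy1 W1(1) W1(2) W1(3) s1] W1(4) by simp
    define Z where "Z = drop j xs1 @ [u]"
    have dj: "drop j xs1 \<noteq> []" "hd (drop j xs1) = w" "last (drop j xs1) = a"
      using j x1 by (auto simp: hd_drop_conv_nth)
    have Z: "Z \<noteq> []" "hd Z = w" "last Z = u" "length Z = l - j + 1"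
        "path_edges Z = insert {a, u} (path_edges (drop j xs1))"
      using dj j by (auto simp: Z_def l_def pe_snoc)
    have tlZ: "tl Z \<noteq> []" using dj by (auto simp: Z_def)
    define W2 where "W2 = tl P @ tl Z"
    have W2: "W2 \<noteq> []" "hd W2 = P ! 1" "last W2 = u" "length W2 = m + (l - j)"
      using tlP tlZ Z j by (auto simp: W2_def last_tl l_def)
    have peW2: "path_edges W2 = path_edges (tl P) \<union> path_edges Z"
      unfolding W2_def by (rule pe_join) (use tlP Z in auto)
    define e2 where "e2 = {u, xs1 ! 1}"
    have e2pe: "e2 \<in> path_edges xs1" using pe_nth[of 0 xs1] x1 ne1 by (simp add: e2_def hd_conv_nth)
    have e2F: "e2 \<in> F" using e2pe x1 by auto
    have e2E: "e2 \<in> E" using e2F FE by auto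
    have ne_eP_e2: "eP \<noteq> e2" using ePF e2F by auto
    have u_dj: "u \<notin> set (drop j xs1)" using hd_notin_drop[OF x1(1) j0] x1 by simp
    have a_ne: "a \<noteq> xs1 ! 1"
    proof -
      have "xs1 ! (length xs1 - 1) \<noteq> xs1 ! 1" by (rule dnth[OF x1(1)]) (use x1 in auto)
      then show ?thesis using x1 ne1 by (simp add: last_conv_nth)
    qed
    have peZ: "path_edges Z \<subseteq> F - {e2}"
    proof
      fix g assume g: "g \<in> path_edges Z"
      show "g \<in> F - {e2}"
      proof (cases "g = {a, u}")
        case True then show ?thesis using a a_ne by (auto simp: e2_def doubleton_eq_iff insert_commute)
      next
        case False
        then have g': "g \<in> path_edges (drop j xs1)" using g Z by auto
        then have "g \<in> F" using pe_drop x1 by blast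
        moreover have "g \<noteq> e2" using pe_sub_set[OF g'] u_dj by (auto simp: e2_def)
        ultimately show ?thesis by simp
      qed
    qed
    have s2: "path_edges W2 \<subseteq> E - {eP, e2}"
      unfolding peW2 using pe_tlP peZ ePF e2F FE by blast
    have o2: "odd (m + (l - j))"
      using even_walk[OF ePE e2E ne_eP_e2 exy1 W2(1) W2(2) W2(3) s2] W2(4) by simp
    have s3: "path_edges xs1 \<subseteq> E - {{u, a}, eP}" using x1(5) ePF FE by blast
    have o3: "odd l"
      using even_walk[OF uaE ePE ne_eP_ua[symmetric] refl ne1 x1(3) x1(4) s3] by (simp add: l_def)
    show False using o1 o2 o3 j by (simp add: l_def)
  qed
  define F' where "F' = F - C1"
  have fF': "finite F'" using fF by (simp add: F'_def)
  have twF': "twosets F'" using twF by (rule twosets_subset) (auto simp: F'_def)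
  have dF': "card (inc F' z) = card (inc F z) - (if z \<in> set xs1 then 2 else 0)" for z
    using card_inc_diff[OF fF C1F, of z] card_inc_ce_cases[OF x1(1) x1(2), of z] by (simp add: F'_def C1_def)
  have F'0: "card (inc F' z) = 0" if "z \<in> set xs1" for z using dF'[of z] leF[of z] that by simp
  have evF': "even (card (inc F' z))" for z
    using dF'[of z] evF[of z] F'0[of z] by (cases "z \<in> set xs1") auto
  have dF'w: "card (inc F' w) = 2" using dF'[of w] dFw w1 by simp
  obtain b where b: "b \<noteq> w" "{w, b} \<in> F'"
  proof -
    have "inc F' w \<noteq> {}" using dF'w by auto
    then obtain g where "g \<in> F'" "w \<in> g" by (auto simp: inc_def)
    then show ?thesis using edge_at[OF twF'] that by blast
  qed
  obtain xs2 where x2: "distinct xs2" "3 \<le> length xs2" "hd xs2 = w" "last xs2 = b"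
      "path_edges xs2 \<subseteq> F' - {{w, b}}"
    using even_cycle[OF fF' twF' evF' b(2)] b(1) by blast
  define C2 where "C2 = cycle_edges xs2"
  have ne2: "xs2 \<noteq> []" using x2 by auto
  have C2: "C2 = insert {w, b} (path_edges xs2)" using ce_pe[OF ne2] x2 by (simp add: C2_def insert_commute)
  have C2F': "C2 \<subseteq> F'" using C2 x2 b by auto
  have C2F: "C2 \<subseteq> F" using C2F' by (auto simp: F'_def)
  have C2E: "C2 \<subseteq> E" using C2F FE by auto
  have s2V: "set xs2 \<subseteq> V" using set_in_V[OF ne2] x2 wV C2E C2 by auto
  have w2: "w \<in> set xs2" using x2 ne2 by auto
  have cC1: "card (inc C1 z) = (if z \<in> set xs1 then 2 else 0)" for z
    using card_inc_ce_cases[OF x1(1) x1(2)] by (simp add: C1_def)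
  have cC2: "card (inc C2 z) = (if z \<in> set xs2 then 2 else 0)" for z
    using card_inc_ce_cases[OF x2(1) x2(2)] by (simp add: C2_def)
  have cmp: "card (inc A z) \<le> card (inc B z)" if "A \<subseteq> B" "B \<subseteq> E" for A B z
    using that fE by (intro card_mono finite_inc inc_mono) (auto intro: finite_subset)
  have inter: "set xs1 \<inter> set xs2 = {}"
  proof -
    have False if z: "z \<in> set xs1" "z \<in> set xs2" for z
      using cmp[OF C2F', of z] F'0[OF z(1)] cC2[of z] z fF' F'_def by (auto simp: F_def)
    then show ?thesis by auto
  qed
  have mid: "z \<notin> set xs1 \<and> z \<notin> set xs2" if "z \<in> set P" "z \<noteq> u" "z \<noteq> w" for z
    using cmp[OF C1F, of z] cmp[OF C2F, of z] dFmid[OF that] cC1[of z] cC2[of z] FE by auto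
  have disj: "C1 \<inter> C2 = {}" using C2F' by (auto simp: F'_def)
  have ua1: "{u, a} \<in> C1" using C1 by simp
  have wb2: "{w, b} \<in> C2" using C2 by simp
  have neab: "{u, a} \<noteq> {w, b}" using ua1 wb2 disj by auto
  have wbE: "{w, b} \<in> E" using wb2 C2E by auto
  have odd1: "odd (length xs1)"
    by (rule even_walk[OF uaE wbE neab refl ne1 x1(3) x1(4)]) (use wb2 x1 disj C1 FE in auto)
  have odd2: "odd (length xs2)"
    by (rule even_walk[OF wbE uaE neab[symmetric] refl ne2 x2(3) x2(4)]) (use ua1 x2 disj C2 F'_def FE in auto)
  have dC1P: "C1 \<inter> path_edges P = {}" and dC2P: "C2 \<inter> path_edges P = {}"
    using C1F C2F by (auto simp: F_def)
  have VE: "V = set xs1 \<union> set xs2 \<union> set P \<and> E = C1 \<union> C2 \<union> path_edges P"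
  proof (rule closure[OF _ _ _ _])
    show "u \<in> set xs1 \<union> set xs2 \<union> set P" using u1 by simp
    show "set xs1 \<union> set xs2 \<union> set P \<subseteq> V" using s1V s2V sPV by simp
    show "C1 \<union> C2 \<union> path_edges P \<subseteq> E" using C1E C2E P by simp
    show "\<forall>g\<in>C1 \<union> C2 \<union> path_edges P. g \<subseteq> set xs1 \<union> set xs2 \<union> set P"
      using ce_sub_set pe_sub_set C1_def C2_def by blast
    show "\<forall>z\<in>set xs1 \<union> set xs2 \<union> set P. inc E z \<subseteq> C1 \<union> C2 \<union> path_edges P"
    proof
      fix z assume z: "z \<in> set xs1 \<union> set xs2 \<union> set P"
      have cP: "card (inc (path_edges P) z) = (if z \<notin> set P then 0 else if z = hd P \<or> z = last P then 1 else 2)"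
        by (rule card_inc_pe_cases[OF P(2) lP])
      have u: "inc (C1 \<union> C2 \<union> path_edges P) z = (inc C1 z \<union> inc C2 z) \<union> inc (path_edges P) z"
        by (auto simp: inc_def)
      have fi: "finite (inc C1 z)" "finite (inc C2 z)" "finite (inc (path_edges P) z)"
        using C1E C2E P(5) fE by (auto intro: finite_inc finite_subset)
      have cu: "card (inc (C1 \<union> C2 \<union> path_edges P) z) = card (inc C1 z) + card (inc C2 z) + card (inc (path_edges P) z)"
      proof -
        have "card (inc C1 z \<union> inc C2 z) = card (inc C1 z) + card (inc C2 z)"
          by (rule card_Un_disjoint[OF fi(1) fi(2)]) (use disj in \<open>auto simp: inc_def\<close>)
        moreover have "card ((inc C1 z \<union> inc C2 z) \<union> inc (path_edges P) z) =
            card (inc C1 z \<union> inc C2 z) + card (inc (path_edges P) z)"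
          by (rule card_Un_disjoint) (use fi dC1P dC2P in \<open>auto simp: inc_def\<close>)
        ultimately show ?thesis by (simp add: u)
      qed
      have "card (inc E z) \<le> card (inc (C1 \<union> C2 \<union> path_edges P) z)"
      proof -
        consider "z = u" | "z = w" | "z \<noteq> u" "z \<noteq> w" by blast
        then show ?thesis
        proof cases
          case 1 then show ?thesis using cu cC1[of z] cP du u1 P uP by simp
        next
          case 2 then show ?thesis using cu cC2[of z] cP dw w2 P wP by simp
        next
          case 3
          then have "card (inc E z) = 2" using z s1V s2V sPV d2 by auto
          moreover have "card (inc C1 z) = 2 \<or> card (inc C2 z) = 2 \<or> card (inc (path_edges P) z) = 2"
            using cC1[of z] cC2[of z] cP z 3 P by auto
          ultimately show ?thesis using cu by linarith
        qed
      qed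
      moreover have sub: "inc (C1 \<union> C2 \<union> path_edges P) z \<subseteq> inc E z" using C1E C2E P by (intro inc_mono) auto
      ultimately have "inc E z \<subseteq> inc (C1 \<union> C2 \<union> path_edges P) z"
        using card_eq_sub[OF sub finite_inc[OF fE]] by blast
      then show "inc E z \<subseteq> C1 \<union> C2 \<union> path_edges P" by (auto simp: inc_def)
    qed
  qed
  have bt: "\<forall>x\<in>set (butlast (tl P)). x \<notin> set xs1 \<and> x \<notin> set xs2"
    using butlast_tl_mem[OF P(2)] mid P by blast
  show ?thesis
    unfolding doubly_odd_paddle_def
    apply (rule exI[of _ xs1], rule exI[of _ xs2])
    apply (intro conjI)
    subgoal using x1 by (simp add: is_cycle_def)
    subgoal using x2 by (simp add: is_cycle_def)
    subgoal by (rule odd1)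
    subgoal by (rule odd2)
    subgoal using disj by (simp add: C1_def C2_def)
    apply (rule disjI2, intro conjI)
    subgoal by (rule inter)
    apply (rule exI[of _ P])
    using P lP u1 w2 bt VE by (simp add: C1_def C2_def)
qed


lemma part1: "\<not> edge_square TYPE('k) V E \<and> doubly_odd_paddle V E"
proof -
  have "(\<Sum>z\<in>V. card (inc E z)) = 2 * card V + 2" using handshake cE by simp
  then have "(\<exists>v\<in>V. card (inc E v) = 4 \<and> (\<forall>z\<in>V. z \<noteq> v \<longrightarrow> card (inc E z) = 2)) \<or>
         (\<exists>u\<in>V. \<exists>w\<in>V. u \<noteq> w \<and> card (inc E u) = 3 \<and> card (inc E w) = 3 \<and>
            (\<forall>z\<in>V. z \<noteq> u \<and> z \<noteq> w \<longrightarrow> card (inc E z) = 2))"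
    using deg_cases[OF fV, of "\<lambda>z. card (inc E z)"] deg_ge2 by blast
  then have "doubly_odd_paddle V E" using caseA caseB by blast
  then show ?thesis using not_edge_square by blast
qed

end


definition idx :: "'a list \<Rightarrow> 'a \<Rightarrow> nat" where
  "idx xs z = (THE i. i < length xs \<and> xs ! i = z)"

lemma idx_nth: "distinct xs \<Longrightarrow> i < length xs \<Longrightarrow> idx xs (xs ! i) = i"
  unfolding idx_def by (rule the_equality) (auto simp: nth_eq_iff_index_eq)

definition ce :: "'a list \<Rightarrow> nat \<Rightarrow> 'a set" where
  "ce c s = {c ! s, c ! ((s + 1) mod length c)}"

definition pe1 :: "'a list \<Rightarrow> nat \<Rightarrow> 'a set" where
  "pe1 p u = {p ! u, p ! (u + 1)}"

lemma cycle_edges_ce: "cycle_edges c = {ce c s | s. s < length c}"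
  by (simp add: cycle_edges_def ce_def)

lemma path_edges_pe1: "path_edges p = {pe1 p u | u. u + 1 < length p}"
  by (simp add: path_edges_def pe1_def)

lemma ce_rotate1: "cycle_edges (rotate1 xs) = cycle_edges xs"
proof (cases xs)
  case (Cons x r)
  show ?thesis
  proof (cases "r = []")
    case True then show ?thesis using Cons by simp
  next
    case False
    have "cycle_edges (r @ [x]) = insert {x, hd r} (insert {last r, x} (path_edges r))"
      using False by (simp add: ce_pe pe_snoc)
    moreover have "cycle_edges (x # r) = insert {last r, x} (insert {x, hd r} (path_edges r))"
      using False by (simp add: ce_pe pe_Cons)
    ultimately show ?thesis using Cons by (simp add: insert_commute)
  qed
qed simp

lemma ce_rotate: "cycle_edges (rotate n xs) = cycle_edges xs"
  by (induction n) (simp_all add: ce_rotate1)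

lemma rotate_to:
  assumes "distinct c" "x \<in> set c"
  shows "\<exists>c'. distinct c' \<and> length c' = length c \<and> set c' = set c \<and> cycle_edges c' = cycle_edges c \<and> c' ! 0 = x"
proof -
  obtain n where n: "n < length c" "c ! n = x" using assms by (auto simp: in_set_conv_nth)
  have "rotate n c ! 0 = c ! ((n + 0) mod length c)" using n by (intro nth_rotate) auto
  then have "rotate n c ! 0 = x" using n by simp
  then show ?thesis using assms ce_rotate[of n c] by (intro exI[of _ "rotate n c"]) auto
qed

lemma ce_inj:
  assumes d: "distinct c" and l: "3 \<le> length c" and s: "s < length c" "s' < length c" and eq: "ce c s = ce c s'"
  shows "s = s'"
proof (rule ccontr)
  assume ne: "s \<noteq> s'"
  let ?m = "length c"
  have "c ! s = c ! s' \<or> c ! s = c ! ((s' + 1) mod ?m)" using eq by (auto simp: ce_def doubleton_eq_iff)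
  moreover have "c ! s \<noteq> c ! s'" using dnth[OF d s ne] .
  ultimately have a: "c ! s = c ! ((s' + 1) mod ?m)" by blast
  have "c ! s' = c ! s \<or> c ! s' = c ! ((s + 1) mod ?m)" using eq by (auto simp: ce_def doubleton_eq_iff)
  then have b: "c ! s' = c ! ((s + 1) mod ?m)" using dnth[OF d s ne] by auto
  have m0: "0 < ?m" using l by linarith
  have a': "s = (s' + 1) mod ?m" using a d s m0 by (simp add: nth_eq_iff_index_eq)
  have b': "s' = (s + 1) mod ?m" using b d s m0 by (simp add: nth_eq_iff_index_eq)
  show False
  proof (cases "s' + 1 < ?m")
    case True
    then have ss: "s = s' + 1" using a' by simp
    show False
    proof (cases "s' + 2 < ?m")
      case True
      then have "(s + 1) mod ?m = s' + 2" using ss by simp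
      then show False using b' by simp
    next
      case False
      then have "s + 1 = ?m" using ss s by simp
      then have "(s + 1) mod ?m = 0" by simp
      then have "s' = 0" using b' by simp
      then show False using ss \<open>s + 1 = ?m\<close> l by simp
    qed
  next
    case False
    then have "s' = ?m - 1" using s by simp
    then have "s = 0" using a' m0 by simp
    then show False using b' l \<open>s' = ?m - 1\<close> by simp
  qed
qed

lemma pe1_inj:
  assumes d: "distinct p" and u: "u + 1 < length p" "u' + 1 < length p" and eq: "pe1 p u = pe1 p u'"
  shows "u = u'"
proof (rule ccontr)
  assume ne: "u \<noteq> u'"
  have "p ! u = p ! u' \<or> p ! u = p ! (u' + 1)" using eq by (auto simp: pe1_def doubleton_eq_iff)
  then have "u = u' \<or> u = u' + 1" using d u by (auto simp: nth_eq_iff_index_eq)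
  moreover have "p ! u' = p ! u \<or> p ! u' = p ! (u + 1)" using eq by (auto simp: pe1_def doubleton_eq_iff)
  then have "u' = u \<or> u' = u + 1" using d u by (auto simp: nth_eq_iff_index_eq)
  ultimately show False using ne by auto
qed

lemma ce_sub: "s < length c \<Longrightarrow> ce c s \<subseteq> set c"
proof -
  assume s: "s < length c"
  then have "(s + 1) mod length c < length c" by (intro mod_less_divisor) linarith
  then show ?thesis using s by (auto simp: ce_def)
qed

lemma pe1_sub: "u + 1 < length p \<Longrightarrow> pe1 p u \<subseteq> set p"
  by (auto simp: pe1_def)

lemma ce_two: "distinct c \<Longrightarrow> 3 \<le> length c \<Longrightarrow> s < length c \<Longrightarrow> c ! s \<noteq> c ! ((s + 1) mod length c)"
  by (rule dnth) (auto simp: mod_if)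

lemma pe1_two: "distinct p \<Longrightarrow> u + 1 < length p \<Longrightarrow> p ! u \<noteq> p ! (u + 1)"
  by (rule dnth) auto

lemma two_in_single: "x \<noteq> y \<Longrightarrow> {x, y} \<subseteq> A \<Longrightarrow> {x, y} \<subseteq> B \<Longrightarrow> A \<inter> B \<subseteq> {z} \<Longrightarrow> False"
  by auto

lemma neg1_pow_ne0: "((-1::'k::field) ^ s) \<noteq> 0"
  by simp

lemma neg1_suc: "((-1::'k::field) ^ (s + 1)) = - ((-1) ^ s)"
  by simp

definition intv :: "nat \<Rightarrow> nat \<Rightarrow> nat \<Rightarrow> 'k::field" where
  "intv lo hi s = (if lo < s \<and> s \<le> hi then (-1) ^ s else 0)"

lemma intv_step: "lo < hi \<Longrightarrow> (intv lo hi s + intv lo hi (s + 1) \<noteq> (0::'k::field)) \<longleftrightarrow> s = lo \<or> s = hi"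
  by (auto simp: intv_def)

definition upto_sg :: "nat \<Rightarrow> nat \<Rightarrow> 'k::field" where
  "upto_sg t u = (if u \<le> t then (-1) ^ u else 0)"

lemma upto_step: "(upto_sg t u + upto_sg t (u + 1) \<noteq> (0::'k::field)) \<longleftrightarrow> u = t"
  by (auto simp: upto_sg_def)

definition sgm :: "nat \<Rightarrow> nat \<Rightarrow> 'k::field" where
  "sgm i s = (if s \<le> i then (-1) ^ s else - ((-1) ^ s))"

lemma sgm_step:
  assumes two: "(2::'k::field) \<noteq> 0" and m: "odd m" and i: "i < m" and s: "s < m"
  shows "(sgm i s + sgm i ((s + 1) mod m) \<noteq> (0::'k)) \<longleftrightarrow> s = i"
proof (cases "s + 1 < m")
  case True
  then have md: "(s + 1) mod m = s + 1" by simp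
  have "sgm i s + sgm i (s + 1) = (if s = i then 2 * (-1) ^ s else (0::'k))"
    by (auto simp: sgm_def)
  then show ?thesis using two md by simp
next
  case False
  then have sm: "s = m - 1" using s by simp
  then have md: "(s + 1) mod m = 0" using s by simp
  have ev: "even s" using sm m by simp
  have "sgm i s + sgm i 0 = (if s = i then 2 else (0::'k))"
    using ev i sm by (auto simp: sgm_def)
  then show ?thesis using two md by simp
qed

lemma intv_wrap:
  assumes "lo < hi" "hi < m"
  shows "(intv lo hi (m - 1) + intv lo hi 0 \<noteq> (0::'k::field)) \<longleftrightarrow> m - 1 = lo \<or> m - 1 = hi"
  using assms by (auto simp: intv_def)


definition th :: "'a list \<Rightarrow> 'a list \<Rightarrow> 'a list \<Rightarrow> (nat \<Rightarrow> 'k) \<Rightarrow> (nat \<Rightarrow> 'k) \<Rightarrow> (nat \<Rightarrow> 'k) \<Rightarrow> 'a \<Rightarrow> 'k::field" where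
  "th c1 c2 ps fa fp fb z = (if z \<in> set c1 then fa (idx c1 z) else if z \<in> set ps then fp (idx ps z)
     else if z \<in> set c2 then fb (idx c2 z) else 0)"

context
  fixes c1 c2 ps :: "'a list"
  assumes d1: "distinct c1" and l1: "3 \<le> length c1" and o1: "odd (length c1)"
    and d2: "distinct c2" and l2: "3 \<le> length c2" and o2: "odd (length c2)"
    and dp: "distinct ps" and nep: "ps \<noteq> []" and h1: "c1 ! 0 = hd ps" and h2: "c2 ! 0 = last ps"
    and i1: "set ps \<inter> set c1 = {hd ps}" and i2: "set ps \<inter> set c2 = {last ps}"
    and i12: "set c1 \<inter> set c2 \<subseteq> set ps"
begin

lemma val1: "s < length c1 \<Longrightarrow> th c1 c2 ps fa fp fb (c1 ! s) = fa s"
  by (simp add: th_def idx_nth[OF d1])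

lemma valp:
  assumes cons1: "fa 0 = fp 0" and u: "u < length ps"
  shows "th c1 c2 ps fa fp fb (ps ! u) = fp u"
proof (cases "u = 0")
  case True
  have p0: "ps ! 0 = hd ps" using nep by (simp add: hd_conv_nth)
  have pu: "ps ! u = c1 ! 0" using True p0 h1 by simp
  have "0 < length c1" using l1 by linarith
  then have "th c1 c2 ps fa fp fb (c1 ! 0) = fa 0" by (rule val1)
  then show ?thesis using pu True cons1 by simp
next
  case False
  have "ps ! u \<noteq> ps ! 0" by (rule dnth[OF dp u]) (use False nep in auto)
  moreover have "ps ! 0 = hd ps" using nep by (simp add: hd_conv_nth)
  ultimately have "ps ! u \<noteq> hd ps" by simp
  moreover have "ps ! u \<in> set ps" using u by simp
  ultimately have "ps ! u \<notin> set c1" using i1 by blast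
  then show ?thesis using u by (simp add: th_def idx_nth[OF dp])
qed

lemma val2:
  assumes cons1: "fa 0 = fp 0" and cons2: "fp (length ps - 1) = fb 0" and s: "s < length c2"
  shows "th c1 c2 ps fa fp fb (c2 ! s) = fb s"
proof (cases "s = 0")
  case True
  have pl: "ps ! (length ps - 1) = last ps" using nep by (simp add: last_conv_nth)
  have e: "c2 ! s = ps ! (length ps - 1)" using True pl h2 by simp
  have "length ps - 1 < length ps" using nep by simp
  then have "th c1 c2 ps fa fp fb (ps ! (length ps - 1)) = fp (length ps - 1)" by (rule valp[where fa=fa and fp=fp and fb=fb, OF cons1])
  then show ?thesis using e True cons2 by simp
next
  case False
  have "c2 ! s \<noteq> c2 ! 0" by (rule dnth[OF d2 s]) (use False l2 in auto)
  then have "c2 ! s \<noteq> last ps" using h2 by simp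
  moreover have "c2 ! s \<in> set c2" using s by simp
  ultimately have n1: "c2 ! s \<notin> set ps" using i2 by blast
  then have "c2 ! s \<notin> set c1" using i12 \<open>c2 ! s \<in> set c2\<close> by blast
  then show ?thesis using s n1 by (simp add: th_def idx_nth[OF d2])
qed

lemma thU: "in_U (set c1 \<union> set c2 \<union> set ps) (th c1 c2 ps fa fp fb)"
  by (auto simp: in_U_def th_def)

lemma dj1p: "s < length c1 \<Longrightarrow> u + 1 < length ps \<Longrightarrow> ce c1 s \<noteq> pe1 ps u"
proof
  assume s: "s < length c1" and u: "u + 1 < length ps" and eq: "ce c1 s = pe1 ps u"
  have "{c1 ! s, c1 ! ((s + 1) mod length c1)} \<subseteq> set c1" using ce_sub[OF s] by (simp add: ce_def)
  moreover have "{c1 ! s, c1 ! ((s + 1) mod length c1)} \<subseteq> set ps" using pe1_sub[OF u] eq by (simp add: ce_def)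
  ultimately have "c1 ! s \<in> set ps \<inter> set c1" "c1 ! ((s + 1) mod length c1) \<in> set ps \<inter> set c1" by auto
  then show False using ce_two[OF d1 l1 s] i1 by simp
qed

lemma dj12: "s < length c1 \<Longrightarrow> s' < length c2 \<Longrightarrow> ce c1 s \<noteq> ce c2 s'"
proof
  assume s: "s < length c1" and s': "s' < length c2" and eq: "ce c1 s = ce c2 s'"
  have "{c1 ! s, c1 ! ((s + 1) mod length c1)} \<subseteq> set c1" using ce_sub[OF s] by (simp add: ce_def)
  moreover have "{c1 ! s, c1 ! ((s + 1) mod length c1)} \<subseteq> set c2" using ce_sub[OF s'] eq by (simp add: ce_def)
  moreover have "set c1 \<inter> set c2 \<subseteq> {hd ps}" using i12 i1 by blast
  ultimately have "c1 ! s \<in> {hd ps}" "c1 ! ((s + 1) mod length c1) \<in> {hd ps}" by auto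
  then show False using ce_two[OF d1 l1 s] by simp
qed

lemma dj2p: "s < length c2 \<Longrightarrow> u + 1 < length ps \<Longrightarrow> ce c2 s \<noteq> pe1 ps u"
proof
  assume s: "s < length c2" and u: "u + 1 < length ps" and eq: "ce c2 s = pe1 ps u"
  have "{c2 ! s, c2 ! ((s + 1) mod length c2)} \<subseteq> set c2" using ce_sub[OF s] by (simp add: ce_def)
  moreover have "{c2 ! s, c2 ! ((s + 1) mod length c2)} \<subseteq> set ps" using pe1_sub[OF u] eq by (simp add: ce_def)
  ultimately have "c2 ! s \<in> set ps \<inter> set c2" "c2 ! ((s + 1) mod length c2) \<in> set ps \<inter> set c2" by auto
  then show False using ce_two[OF d2 l2 s] i2 by simp
qed

lemma supp:
  fixes fa fp fb :: "nat \<Rightarrow> 'k::field"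
  assumes cons1: "fa 0 = fp 0" and cons2: "fp (length ps - 1) = fb 0"
    and Z: "Z \<subseteq> cycle_edges c1 \<union> cycle_edges c2 \<union> path_edges ps"
    and hc1: "\<And>s. s < length c1 \<Longrightarrow> (fa s + fa ((s + 1) mod length c1) \<noteq> 0) \<longleftrightarrow> ce c1 s \<in> Z"
    and hp: "\<And>u. u + 1 < length ps \<Longrightarrow> (fp u + fp (u + 1) \<noteq> 0) \<longleftrightarrow> pe1 ps u \<in> Z"
    and hc2: "\<And>s. s < length c2 \<Longrightarrow> (fb s + fb ((s + 1) mod length c2) \<noteq> 0) \<longleftrightarrow> ce c2 s \<in> Z"
  shows "support (cycle_edges c1 \<union> cycle_edges c2 \<union> path_edges ps)
           (square (cycle_edges c1 \<union> cycle_edges c2 \<union> path_edges ps) (th c1 c2 ps fa fp fb)) = Z"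
proof -
  let ?E = "cycle_edges c1 \<union> cycle_edges c2 \<union> path_edges ps"
  let ?t = "th c1 c2 ps fa fp fb"
  have key: "sum ?t g \<noteq> 0 \<longleftrightarrow> g \<in> Z" if g: "g \<in> ?E" for g
  proof -
    consider (a) s where "s < length c1" "g = ce c1 s" | (b) s where "s < length c2" "g = ce c2 s"
      | (c) u where "u + 1 < length ps" "g = pe1 ps u"
      using g by (auto simp: cycle_edges_ce path_edges_pe1)
    then show ?thesis
    proof cases
      case a
      have m: "Suc a mod length c1 < length c1" for a using l1 by (intro mod_less_divisor) linarith
      have "sum ?t g = fa s + fa ((s + 1) mod length c1)"
        using a ce_two[OF d1 l1 a(1)] val1[OF m[of s], of fa fp fb] val1[OF a(1), of fa fp fb] by (simp add: ce_def)
      then show ?thesis using hc1[OF a(1)] a by simp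
    next
      case b
      have m: "Suc a mod length c2 < length c2" for a using l2 by (intro mod_less_divisor) linarith
      have "sum ?t g = fb s + fb ((s + 1) mod length c2)"
        using b ce_two[OF d2 l2 b(1)] val2[where fa=fa and fp=fp and fb=fb, OF cons1 cons2 m[of s]] val2[where fa=fa and fp=fp and fb=fb, OF cons1 cons2 b(1)] by (simp add: ce_def)
      then show ?thesis using hc2[OF b(1)] b by simp
    next
      case c
      have "sum ?t g = fp u + fp (u + 1)"
        using c pe1_two[OF dp c(1)] valp[where fa=fa and fp=fp and fb=fb and u=u, OF cons1] valp[where fa=fa and fp=fp and fb=fb and u="u+1", OF cons1] by (simp add: pe1_def)
      then show ?thesis using hp[OF c(1)] c by simp
    qed
  qed
  show ?thesis
  proof (intro set_eqI)
    fix g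
    have "g \<in> support ?E (square ?E ?t) \<longleftrightarrow> g \<in> ?E \<and> sum ?t g \<noteq> 0"
      unfolding support_def square_def by simp
    then show "g \<in> support ?E (square ?E ?t) \<longleftrightarrow> g \<in> Z" using Z key[of g] by blast
  qed
qed


lemma ce_mem: "s < length c \<Longrightarrow> ce c s \<in> cycle_edges c"
  by (auto simp: cycle_edges_ce)

lemma pe1_mem: "u + 1 < length p \<Longrightarrow> pe1 p u \<in> path_edges p"
  by (auto simp: path_edges_pe1)

lemma ce1_eq: "s < length c1 \<Longrightarrow> i < length c1 \<Longrightarrow> ce c1 s = ce c1 i \<longleftrightarrow> s = i"
  using ce_inj[OF d1 l1] by blast

lemma ce2_eq: "s < length c2 \<Longrightarrow> i < length c2 \<Longrightarrow> ce c2 s = ce c2 i \<longleftrightarrow> s = i"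
  using ce_inj[OF d2 l2] by blast

lemma pe1_eq: "u + 1 < length ps \<Longrightarrow> t + 1 < length ps \<Longrightarrow> pe1 ps u = pe1 ps t \<longleftrightarrow> u = t"
  using pe1_inj[OF dp] by blast

lemma wrap_cases:
  fixes s m :: nat
  assumes "s < m"
  obtains (lt) "s + 1 < m" "(s + 1) mod m = s + 1" | (eq) "s = m - 1" "(s + 1) mod m = 0"
proof (cases "s + 1 < m")
  case True
  have "(s + 1) mod m = s + 1" using True by (rule mod_less)
  then show ?thesis using lt True by blast
next
  case False then have "s = m - 1" "s + 1 = m" using assms by auto
  then show ?thesis using eq by simp
qed

lemma LCC:
  assumes i: "i < i'" "i' < length c1"
  shows "\<exists>\<theta> :: 'a \<Rightarrow> 'k::field. in_U (set c1 \<union> set c2 \<union> set ps) \<theta> \<and>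
     support (cycle_edges c1 \<union> cycle_edges c2 \<union> path_edges ps)
       (square (cycle_edges c1 \<union> cycle_edges c2 \<union> path_edges ps) \<theta>) = {ce c1 i, ce c1 i'}"
proof -
  let ?Z = "{ce c1 i, ce c1 i'}"
  have "support (cycle_edges c1 \<union> cycle_edges c2 \<union> path_edges ps)
       (square (cycle_edges c1 \<union> cycle_edges c2 \<union> path_edges ps)
         (th c1 c2 ps (intv i i') (\<lambda>_. 0) (\<lambda>_. 0 :: 'k))) = ?Z"
  proof (rule supp)
    show "intv i i' 0 = (0::'k)" by (simp add: intv_def)
    show "(0::'k) = 0" by simp
    show "?Z \<subseteq> cycle_edges c1 \<union> cycle_edges c2 \<union> path_edges ps" using i ce_mem by auto
  next
    fix s assume s: "s < length c1"
    have "ce c1 s \<in> ?Z \<longleftrightarrow> s = i \<or> s = i'" using ce1_eq[OF s] i by auto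
    moreover have "(intv i i' s + intv i i' ((s + 1) mod length c1) \<noteq> (0::'k)) \<longleftrightarrow> s = i \<or> s = i'"
    proof (cases rule: wrap_cases[OF s])
      case 1 then show ?thesis using intv_step[OF i(1), of s] by simp
    next
      case 2 then show ?thesis using intv_wrap[OF i, where 'k='k] by simp
    qed
    ultimately show "(intv i i' s + intv i i' ((s + 1) mod length c1) \<noteq> (0::'k)) \<longleftrightarrow> ce c1 s \<in> ?Z"
      by simp
  next
    fix u assume u: "u + 1 < length ps"
    show "((0::'k) + 0 \<noteq> 0) \<longleftrightarrow> pe1 ps u \<in> ?Z" using dj1p[of i u] dj1p[of i' u] u i by auto
  next
    fix s assume s: "s < length c2"
    show "((0::'k) + 0 \<noteq> 0) \<longleftrightarrow> ce c2 s \<in> ?Z" using dj12[of i s] dj12[of i' s] s i by auto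
  qed
  then show ?thesis using thU by blast
qed

lemma LPP:
  assumes t: "t < t'" "t' + 1 < length ps"
  shows "\<exists>\<theta> :: 'a \<Rightarrow> 'k::field. in_U (set c1 \<union> set c2 \<union> set ps) \<theta> \<and>
     support (cycle_edges c1 \<union> cycle_edges c2 \<union> path_edges ps)
       (square (cycle_edges c1 \<union> cycle_edges c2 \<union> path_edges ps) \<theta>) = {pe1 ps t, pe1 ps t'}"
proof -
  let ?Z = "{pe1 ps t, pe1 ps t'}"
  have "support (cycle_edges c1 \<union> cycle_edges c2 \<union> path_edges ps)
       (square (cycle_edges c1 \<union> cycle_edges c2 \<union> path_edges ps)
         (th c1 c2 ps (\<lambda>_. 0) (intv t t') (\<lambda>_. 0 :: 'k))) = ?Z"
  proof (rule supp)
    show "(0::'k) = intv t t' 0" by (simp add: intv_def)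
    have "\<not> (length ps - 1 \<le> t')" using t by linarith
    then show "intv t t' (length ps - 1) = (0::'k)" by (simp add: intv_def)
    show "?Z \<subseteq> cycle_edges c1 \<union> cycle_edges c2 \<union> path_edges ps" using t pe1_mem by auto
  next
    fix s assume s: "s < length c1"
    show "((0::'k) + 0 \<noteq> 0) \<longleftrightarrow> ce c1 s \<in> ?Z" using dj1p[of s t] dj1p[of s t'] s t by auto
  next
    fix u assume u: "u + 1 < length ps"
    have "pe1 ps u \<in> ?Z \<longleftrightarrow> u = t \<or> u = t'" using pe1_eq[OF u] t by auto
    then show "(intv t t' u + intv t t' (u + 1) \<noteq> (0::'k)) \<longleftrightarrow> pe1 ps u \<in> ?Z"
      using intv_step[OF t(1), of u] by simp
  next
    fix s assume s: "s < length c2"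
    show "((0::'k) + 0 \<noteq> 0) \<longleftrightarrow> ce c2 s \<in> ?Z" using dj2p[of s t] dj2p[of s t'] s t by auto
  qed
  then show ?thesis using thU by blast
qed

lemma LCP:
  assumes two: "(2::'k::field) \<noteq> 0" and i: "i < length c1" and t: "t + 1 < length ps"
  shows "\<exists>\<theta> :: 'a \<Rightarrow> 'k. in_U (set c1 \<union> set c2 \<union> set ps) \<theta> \<and>
     support (cycle_edges c1 \<union> cycle_edges c2 \<union> path_edges ps)
       (square (cycle_edges c1 \<union> cycle_edges c2 \<union> path_edges ps) \<theta>) = {ce c1 i, pe1 ps t}"
proof -
  let ?Z = "{ce c1 i, pe1 ps t}"
  have "support (cycle_edges c1 \<union> cycle_edges c2 \<union> path_edges ps)
       (square (cycle_edges c1 \<union> cycle_edges c2 \<union> path_edges ps)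
         (th c1 c2 ps (sgm i) (upto_sg t) (\<lambda>_. 0 :: 'k))) = ?Z"
  proof (rule supp)
    show "sgm i 0 = (upto_sg t 0 :: 'k)" by (simp add: sgm_def upto_sg_def)
    show "upto_sg t (length ps - 1) = (0::'k)" using t by (simp add: upto_sg_def)
    show "?Z \<subseteq> cycle_edges c1 \<union> cycle_edges c2 \<union> path_edges ps" using i t ce_mem pe1_mem by auto
  next
    fix s assume s: "s < length c1"
    have "ce c1 s \<in> ?Z \<longleftrightarrow> s = i" using ce1_eq[OF s i] dj1p[OF s t] by auto
    then show "(sgm i s + sgm i ((s + 1) mod length c1) \<noteq> (0::'k)) \<longleftrightarrow> ce c1 s \<in> ?Z"
      using sgm_step[OF two o1 i s] by simp
  next
    fix u assume u: "u + 1 < length ps"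
    have "pe1 ps u \<in> ?Z \<longleftrightarrow> u = t" using pe1_eq[OF u t] dj1p[OF i u] by auto
    then show "(upto_sg t u + upto_sg t (u + 1) \<noteq> (0::'k)) \<longleftrightarrow> pe1 ps u \<in> ?Z"
      using upto_step[of t u] by simp
  next
    fix s assume s: "s < length c2"
    show "((0::'k) + 0 \<noteq> 0) \<longleftrightarrow> ce c2 s \<in> ?Z" using dj12[OF i s] dj2p[OF s t] by auto
  qed
  then show ?thesis using thU by blast
qed

lemma LC12:
  assumes two: "(2::'k::field) \<noteq> 0" and i: "i < length c1" and j: "j < length c2"
  shows "\<exists>\<theta> :: 'a \<Rightarrow> 'k. in_U (set c1 \<union> set c2 \<union> set ps) \<theta> \<and>
     support (cycle_edges c1 \<union> cycle_edges c2 \<union> path_edges ps)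
       (square (cycle_edges c1 \<union> cycle_edges c2 \<union> path_edges ps) \<theta>) = {ce c1 i, ce c2 j}"
proof -
  let ?Z = "{ce c1 i, ce c2 j}"
  let ?k = "length ps - 1"
  have "support (cycle_edges c1 \<union> cycle_edges c2 \<union> path_edges ps)
       (square (cycle_edges c1 \<union> cycle_edges c2 \<union> path_edges ps)
         (th c1 c2 ps (sgm i) (\<lambda>u. (-1) ^ u) (\<lambda>s. (-1) ^ ?k * sgm j s :: 'k))) = ?Z"
  proof (rule supp)
    show "sgm i 0 = ((-1) ^ 0 :: 'k)" by (simp add: sgm_def)
    show "(-1) ^ ?k = ((-1) ^ ?k * sgm j 0 :: 'k)" by (simp add: sgm_def)
    show "?Z \<subseteq> cycle_edges c1 \<union> cycle_edges c2 \<union> path_edges ps" using i j ce_mem by auto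
  next
    fix s assume s: "s < length c1"
    have "ce c1 s \<in> ?Z \<longleftrightarrow> s = i" using ce1_eq[OF s i] dj12[OF s j] by auto
    then show "(sgm i s + sgm i ((s + 1) mod length c1) \<noteq> (0::'k)) \<longleftrightarrow> ce c1 s \<in> ?Z"
      using sgm_step[OF two o1 i s] by simp
  next
    fix u assume u: "u + 1 < length ps"
    show "(((-1) ^ u + (-1) ^ (u + 1)) \<noteq> (0::'k)) \<longleftrightarrow> pe1 ps u \<in> ?Z" using dj1p[OF i u] dj2p[OF j u] by auto
  next
    fix s assume s: "s < length c2"
    have "ce c2 s \<in> ?Z \<longleftrightarrow> s = j" using ce2_eq[OF s j] dj12[OF i s] by auto
    moreover have "((-1) ^ ?k * sgm j s + (-1) ^ ?k * sgm j ((s + 1) mod length c2) \<noteq> (0::'k))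
        \<longleftrightarrow> (sgm j s + sgm j ((s + 1) mod length c2) \<noteq> (0::'k))"
      by (simp add: distrib_left[symmetric])
    ultimately show "((-1) ^ ?k * sgm j s + (-1) ^ ?k * sgm j ((s + 1) mod length c2) \<noteq> (0::'k)) \<longleftrightarrow> ce c2 s \<in> ?Z"
      using sgm_step[OF two o2 j s] by simp
  qed
  then show ?thesis using thU by blast
qed

lemma LC1any:
  assumes two: "(2::'k::field) \<noteq> 0" and e1: "e1 \<in> cycle_edges c1"
    and e2: "e2 \<in> cycle_edges c1 \<union> cycle_edges c2 \<union> path_edges ps" and ne: "e1 \<noteq> e2"
  shows "\<exists>\<theta> :: 'a \<Rightarrow> 'k. in_U (set c1 \<union> set c2 \<union> set ps) \<theta> \<and>
     support (cycle_edges c1 \<union> cycle_edges c2 \<union> path_edges ps)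
       (square (cycle_edges c1 \<union> cycle_edges c2 \<union> path_edges ps) \<theta>) = {e1, e2}"
proof -
  obtain i where i: "i < length c1" "e1 = ce c1 i" using e1 by (auto simp: cycle_edges_ce)
  consider (a) i' where "i' < length c1" "e2 = ce c1 i'" | (b) j where "j < length c2" "e2 = ce c2 j"
    | (c) t where "t + 1 < length ps" "e2 = pe1 ps t"
    using e2 by (auto simp: cycle_edges_ce path_edges_pe1)
  then show ?thesis
  proof cases
    case a
    then have "i \<noteq> i'" using ne i by auto
    then consider "i < i'" | "i' < i" by linarith
    then show ?thesis
    proof cases
      case 1 then show ?thesis using LCC[OF 1 a(1), where 'k='k] i a by simp
    next
      case 2 then show ?thesis using LCC[OF 2 i(1), where 'k='k] i a by (simp add: insert_commute)
    qed
  next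
    case b then show ?thesis using LC12[OF two i(1) b(1)] i by simp
  next
    case c then show ?thesis using LCP[OF two i(1) c(1)] i by simp
  qed
qed

lemma LPPany:
  assumes e1: "e1 \<in> path_edges ps" and e2: "e2 \<in> path_edges ps" and ne: "e1 \<noteq> e2"
  shows "\<exists>\<theta> :: 'a \<Rightarrow> 'k::field. in_U (set c1 \<union> set c2 \<union> set ps) \<theta> \<and>
     support (cycle_edges c1 \<union> cycle_edges c2 \<union> path_edges ps)
       (square (cycle_edges c1 \<union> cycle_edges c2 \<union> path_edges ps) \<theta>) = {e1, e2}"
proof -
  obtain t where t: "t + 1 < length ps" "e1 = pe1 ps t" using e1 by (auto simp: path_edges_pe1)
  obtain t' where t': "t' + 1 < length ps" "e2 = pe1 ps t'" using e2 by (auto simp: path_edges_pe1)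
  have "t \<noteq> t'" using ne t t' by auto
  then consider "t < t'" | "t' < t" by linarith
  then show ?thesis
  proof cases
    case 1 then show ?thesis using LPP[OF 1 t'(1), where 'k='k] t t' by simp
  next
    case 2 then show ?thesis using LPP[OF 2 t(1), where 'k='k] t t' by (simp add: insert_commute)
  qed
qed

end


lemma interior_mem:
  assumes d: "distinct ps" and x: "x \<in> set ps" "x \<noteq> hd ps" "x \<noteq> last ps"
  shows "x \<in> set (butlast (tl ps))"
proof (cases ps)
  case Nil then show ?thesis using x by simp
next
  case (Cons y r)
  then have xr: "x \<in> set r" using x by auto
  then have rne: "r \<noteq> []" by auto
  have "x \<noteq> last r" using x Cons rne by simp
  moreover have "r = butlast r @ [last r]" using rne by simp
  ultimately have "x \<in> set (butlast r)" using xr by (metis Un_iff empty_iff empty_set list.set(2) set_append singletonD)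
  then show ?thesis using Cons by simp
qed

lemma gp_two_edge:
  assumes d1: "distinct c1" and l1: "3 \<le> length c1" and o1: "odd (length c1)"
    and d2: "distinct c2" and l2: "3 \<le> length c2" and o2: "odd (length c2)"
    and dp: "distinct ps" and nep: "ps \<noteq> []" and h1: "c1 ! 0 = hd ps" and h2: "c2 ! 0 = last ps"
    and i1: "set ps \<inter> set c1 = {hd ps}" and i2: "set ps \<inter> set c2 = {last ps}"
    and i12: "set c1 \<inter> set c2 \<subseteq> set ps"
    and two: "(2::'k::field) \<noteq> 0"
  shows "two_edge_support TYPE('k) (set c1 \<union> set c2 \<union> set ps) (cycle_edges c1 \<union> cycle_edges c2 \<union> path_edges ps)"
proof -
  let ?V = "set c1 \<union> set c2 \<union> set ps"
  let ?E = "cycle_edges c1 \<union> cycle_edges c2 \<union> path_edges ps"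
  have V': "set c2 \<union> set c1 \<union> set (rev ps) = ?V" by auto
  have E': "cycle_edges c2 \<union> cycle_edges c1 \<union> path_edges (rev ps) = ?E" by auto
  have A: "\<exists>\<theta> :: 'a \<Rightarrow> 'k. in_U ?V \<theta> \<and> support ?E (square ?E \<theta>) = {e1, e2}"
    if "e1 \<in> cycle_edges c1" "e2 \<in> ?E" "e1 \<noteq> e2" for e1 e2
    using LC1any[OF d1 l1 o1 d2 l2 o2 dp nep h1 h2 i1 i2 i12 two that] .
  have B: "\<exists>\<theta> :: 'a \<Rightarrow> 'k. in_U ?V \<theta> \<and> support ?E (square ?E \<theta>) = {e1, e2}"
    if "e1 \<in> cycle_edges c2" "e2 \<in> ?E" "e1 \<noteq> e2" for e1 e2
  proof -
    have "\<exists>\<theta> :: 'a \<Rightarrow> 'k. in_U (set c2 \<union> set c1 \<union> set (rev ps)) \<theta> \<and>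
       support (cycle_edges c2 \<union> cycle_edges c1 \<union> path_edges (rev ps))
        (square (cycle_edges c2 \<union> cycle_edges c1 \<union> path_edges (rev ps)) \<theta>) = {e1, e2}"
    proof (rule LC1any[OF d2 l2 o2 d1 l1 o1])
      show "distinct (rev ps)" using dp by simp
      show "rev ps \<noteq> []" using nep by simp
      show "c2 ! 0 = hd (rev ps)" using h2 by (simp add: hd_rev)
      show "c1 ! 0 = last (rev ps)" using h1 by (simp add: last_rev)
      show "set (rev ps) \<inter> set c2 = {hd (rev ps)}" using i2 by (simp add: hd_rev)
      show "set (rev ps) \<inter> set c1 = {last (rev ps)}" using i1 by (simp add: last_rev)
      show "set c2 \<inter> set c1 \<subseteq> set (rev ps)" using i12 by auto
      show "(2::'k) \<noteq> 0" by (rule two)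
      show "e1 \<in> cycle_edges c2" by (rule that(1))
      show "e2 \<in> cycle_edges c2 \<union> cycle_edges c1 \<union> path_edges (rev ps)" using that(2) E' by simp
      show "e1 \<noteq> e2" by (rule that(3))
    qed
    then show ?thesis unfolding V' E' .
  qed
  show ?thesis
    unfolding two_edge_support_def
  proof (intro ballI impI)
    fix e1 e2 assume e1: "e1 \<in> ?E" and e2: "e2 \<in> ?E" and ne: "e1 \<noteq> e2"
    have sw: "{e2, e1} = {e1, e2}" by auto
    show "\<exists>\<theta> :: 'a \<Rightarrow> 'k. in_U ?V \<theta> \<and> support ?E (square ?E \<theta>) = {e1, e2}"
    proof (cases "e1 \<in> cycle_edges c1 \<union> cycle_edges c2 \<or> e2 \<in> cycle_edges c1 \<union> cycle_edges c2")
      case True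
      then consider "e1 \<in> cycle_edges c1" | "e1 \<in> cycle_edges c2" | "e2 \<in> cycle_edges c1" | "e2 \<in> cycle_edges c2"
        by blast
      then show ?thesis
      proof cases
        case 1 show ?thesis by (rule A[OF 1 e2 ne])
      next
        case 2 show ?thesis by (rule B[OF 2 e2 ne])
      next
        case 3 then show ?thesis using A[OF 3 e1 ne[symmetric]] sw by simp
      next
        case 4 then show ?thesis using B[OF 4 e1 ne[symmetric]] sw by simp
      qed
    next
      case False
      then have "e1 \<in> path_edges ps" "e2 \<in> path_edges ps" using e1 e2 by auto
      then show ?thesis
        using LPPany[OF d1 l1 o1 d2 l2 o2 dp nep h1 h2 i1 i2 i12, where 'k='k] ne by blast
    qed
  qed
qed

lemma part2:
  assumes two: "(2::'k::field) \<noteq> 0" and dop: "doubly_odd_paddle V E"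
  shows "two_edge_support TYPE('k) V E"
proof -
  obtain c1 c2 where c: "is_cycle c1" "is_cycle c2" "odd (length c1)" "odd (length c2)"
      "cycle_edges c1 \<inter> cycle_edges c2 = {}"
    and cases: "(\<exists>v. set c1 \<inter> set c2 = {v} \<and> V = set c1 \<union> set c2 \<and> E = cycle_edges c1 \<union> cycle_edges c2)
         \<or> (set c1 \<inter> set c2 = {} \<and>
            (\<exists>ps. distinct ps \<and> length ps \<ge> 2 \<and>
               hd ps \<in> set c1 \<and> last ps \<in> set c2 \<and>
               (\<forall>x\<in>set (butlast (tl ps)). x \<notin> set c1 \<and> x \<notin> set c2) \<and>
               V = set c1 \<union> set c2 \<union> set ps \<and>
               E = cycle_edges c1 \<union> cycle_edges c2 \<union> path_edges ps))"
    using dop unfolding doubly_odd_paddle_def by blast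
  have d1: "distinct c1" "3 \<le> length c1" and d2: "distinct c2" "3 \<le> length c2"
    using c by (auto simp: is_cycle_def)
  from cases show ?thesis
  proof
    assume "\<exists>v. set c1 \<inter> set c2 = {v} \<and> V = set c1 \<union> set c2 \<and> E = cycle_edges c1 \<union> cycle_edges c2"
    then obtain v where v: "set c1 \<inter> set c2 = {v}" "V = set c1 \<union> set c2" "E = cycle_edges c1 \<union> cycle_edges c2"
      by blast
    obtain c1' where c1': "distinct c1'" "length c1' = length c1" "set c1' = set c1"
        "cycle_edges c1' = cycle_edges c1" "c1' ! 0 = v"
      using rotate_to[OF d1(1), of v] v by auto
    obtain c2' where c2': "distinct c2'" "length c2' = length c2" "set c2' = set c2"
        "cycle_edges c2' = cycle_edges c2" "c2' ! 0 = v"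
      using rotate_to[OF d2(1), of v] v by auto
    have "two_edge_support TYPE('k) (set c1' \<union> set c2' \<union> set [v]) (cycle_edges c1' \<union> cycle_edges c2' \<union> path_edges [v])"
    proof (rule gp_two_edge[OF c1'(1) _ _ c2'(1) _ _ _ _ _ _ _ _ _ two])
      show "3 \<le> length c1'" "odd (length c1')" using c1'(2) d1(2) c(3) by simp_all
      show "3 \<le> length c2'" "odd (length c2')" using c2'(2) d2(2) c(4) by simp_all
      show "distinct [v]" "[v] \<noteq> []" "c1' ! 0 = hd [v]" "c2' ! 0 = last [v]"
        using c1'(5) c2'(5) by simp_all
      have "v \<in> set c1" "v \<in> set c2" using v(1) by auto
      then show "set [v] \<inter> set c1' = {hd [v]}" "set [v] \<inter> set c2' = {last [v]}"
        using c1'(3) c2'(3) by auto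
      show "set c1' \<inter> set c2' \<subseteq> set [v]" using c1'(3) c2'(3) v(1) by simp
    qed
    moreover have "set c1' \<union> set c2' \<union> set [v] = V" using c1' c2' v by auto
    moreover have "cycle_edges c1' \<union> cycle_edges c2' \<union> path_edges [v] = E" using c1' c2' v by auto
    ultimately show ?thesis by simp
  next
    assume "set c1 \<inter> set c2 = {} \<and>
            (\<exists>ps. distinct ps \<and> length ps \<ge> 2 \<and>
               hd ps \<in> set c1 \<and> last ps \<in> set c2 \<and>
               (\<forall>x\<in>set (butlast (tl ps)). x \<notin> set c1 \<and> x \<notin> set c2) \<and>
               V = set c1 \<union> set c2 \<union> set ps \<and>
               E = cycle_edges c1 \<union> cycle_edges c2 \<union> path_edges ps)"
    then obtain ps where dj: "set c1 \<inter> set c2 = {}" and ps: "distinct ps" "length ps \<ge> 2"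
        "hd ps \<in> set c1" "last ps \<in> set c2" "\<forall>x\<in>set (butlast (tl ps)). x \<notin> set c1 \<and> x \<notin> set c2"
        "V = set c1 \<union> set c2 \<union> set ps" "E = cycle_edges c1 \<union> cycle_edges c2 \<union> path_edges ps"
      by blast
    have nep: "ps \<noteq> []" using ps(2) by auto
    obtain c1' where c1': "distinct c1'" "length c1' = length c1" "set c1' = set c1"
        "cycle_edges c1' = cycle_edges c1" "c1' ! 0 = hd ps"
      using rotate_to[OF d1(1) ps(3)] by auto
    obtain c2' where c2': "distinct c2'" "length c2' = length c2" "set c2' = set c2"
        "cycle_edges c2' = cycle_edges c2" "c2' ! 0 = last ps"
      using rotate_to[OF d2(1) ps(4)] by auto
    have hdps: "hd ps \<in> set ps" and lps: "last ps \<in> set ps" using nep by auto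
    have i1: "set ps \<inter> set c1 = {hd ps}"
    proof (intro equalityI subsetI)
      fix x assume x: "x \<in> set ps \<inter> set c1"
      have xps: "x \<in> set ps" and xc: "x \<in> set c1" using x by auto
      show "x \<in> {hd ps}"
      proof (rule ccontr)
        assume "x \<notin> {hd ps}"
        then have nh: "x \<noteq> hd ps" by simp
        show False
        proof (cases "x = last ps")
          case True then have "x \<in> set c2" using ps(4) by simp
          then show False using xc dj by blast
        next
          case False
          have "x \<in> set (butlast (tl ps))" by (rule interior_mem[OF ps(1) xps nh False])
          then show False using ps(5) xc by blast
        qed
      qed
    next
      fix x assume "x \<in> {hd ps}" then show "x \<in> set ps \<inter> set c1" using hdps ps(3) by simp
    qed
    have i2: "set ps \<inter> set c2 = {last ps}"
    proof (intro equalityI subsetI)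
      fix x assume x: "x \<in> set ps \<inter> set c2"
      have xps: "x \<in> set ps" and xc: "x \<in> set c2" using x by auto
      show "x \<in> {last ps}"
      proof (rule ccontr)
        assume "x \<notin> {last ps}"
        then have nl: "x \<noteq> last ps" by simp
        show False
        proof (cases "x = hd ps")
          case True then have "x \<in> set c1" using ps(3) by simp
          then show False using xc dj by blast
        next
          case False
          have "x \<in> set (butlast (tl ps))" by (rule interior_mem[OF ps(1) xps False nl])
          then show False using ps(5) xc by blast
        qed
      qed
    next
      fix x assume "x \<in> {last ps}" then show "x \<in> set ps \<inter> set c2" using lps ps(4) by simp
    qed
    have "two_edge_support TYPE('k) (set c1' \<union> set c2' \<union> set ps) (cycle_edges c1' \<union> cycle_edges c2' \<union> path_edges ps)"
    proof (rule gp_two_edge[OF c1'(1) _ _ c2'(1) _ _ ps(1) nep _ _ _ _ _ two])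
      show "3 \<le> length c1'" "odd (length c1')" using c1'(2) d1(2) c(3) by simp_all
      show "3 \<le> length c2'" "odd (length c2')" using c2'(2) d2(2) c(4) by simp_all
      show "c1' ! 0 = hd ps" "c2' ! 0 = last ps" using c1'(5) c2'(5) by simp_all
      show "set ps \<inter> set c1' = {hd ps}" "set ps \<inter> set c2' = {last ps}"
        using c1'(3) c2'(3) i1 i2 by simp_all
      show "set c1' \<inter> set c2' \<subseteq> set ps" using c1'(3) c2'(3) dj by simp
    qed
    then show ?thesis using c1' c2' ps by simp
  qed
qed

theorem theorem7p3:
  assumes "(2::'k::field) \<noteq> 0"
  shows "(\<forall>(V :: 'a set) (E :: 'a set set).
            simple_graph V E \<and> connected_graph V E \<and> card E = card V + 1 \<and>
            two_edge_support TYPE('k) V E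
            \<longrightarrow> \<not> edge_square TYPE('k) V E \<and> doubly_odd_paddle V E) \<and>
         (\<forall>(V :: 'a set) (E :: 'a set set). doubly_odd_paddle V E \<longrightarrow>
            two_edge_support TYPE('k) V E)"
proof (rule conjI; intro allI impI)
  fix V :: "'a set" and E :: "'a set set"
  assume h: "simple_graph V E \<and> connected_graph V E \<and> card E = card V + 1 \<and> two_edge_support TYPE('k) V E"
  show "\<not> edge_square TYPE('k) V E \<and> doubly_odd_paddle V E"
    by (rule part1) (use h assms in simp_all)
next
  fix V :: "'a set" and E :: "'a set set"
  assume "doubly_odd_paddle V E"
  then show "two_edge_support TYPE('k) V E" by (rule part2[OF assms])
qed


end
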